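(* Let $q$ be a prime power and let $m$ be an integer with $1\leq m\leq q-1$. Let $W_m(q)$ be the Wenger graph defined below. Then the distinct eigenvalues of the adjacency matrix of $W_m(q)$ are $$\pm q,\ \pm\sqrt{mq},\ \pm\sqrt{(m-1)q},\ \ldots,\ \pm\sqrt{2q},\ \pm\sqrt{q},\ 0.$$ Moreover, for each $0\leq i\leq m$, the multiplicity of the eigenvalue $\pm\sqrt{iq}$ of $W_m(q)$ is $$(q-1)\binom{q}{i}\sum_{d=i}^{m}\sum_{k=0}^{d-i}(-1)^k\binom{q-i}{k}q^{d-i-k}.$$
   Context: Let $q=p^e$ with $p$ prime and $e\geq 1$, and let $\mathbb{F}_q$ be the finite field with $q$ elements. For $m\geq 1$, the Wenger graph $W_m(q)$ is the bipartite graph with partite sets $P$ and $L$, two disjoint copies of $\mathbb{F}_q^{m+1}$ (elements of $P$ are written $(p)=(p_1,\ldots,p_{m+1})$ and called points, elements of $L$ are written $[l]=[l_1,\ldots,l_{m+1}]$ and called lines), where a point $(p)$ is adjacent to a line $[l]$ if and only if $l_{i+1}+p_{i+1}=l_i p_1$ for all $i=1,\ldots,m$. The eigenvalues of a graph are those of its adjacency matrix. *)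

theory Defs
  imports "Jordan_Normal_Form.Char_Poly"
begin

text \<open>Finite field F_q: a type of class field and finite; q = CARD('a).
  Vectors of F_q^(m+1) are lists of length m+1; entry p_j is p ! (j-1).
  Vertices: Inl p = point (p), Inr l = line [l].\<close>

definition wenger_incident :: "nat \<Rightarrow> 'a::field list \<Rightarrow> 'a list \<Rightarrow> bool" where
  "wenger_incident m p l \<longleftrightarrow>
     (\<forall>i\<in>{1..m}. l ! i + p ! i = l ! (i - 1) * p ! 0)"

definition wenger_vertices :: "nat \<Rightarrow> ('a::field list + 'a list) set" where
  "wenger_vertices m = Inl ` {p. length p = Suc m} \<union> Inr ` {l. length l = Suc m}"

definition wenger_adj :: "nat \<Rightarrow> ('a::field list + 'a list) \<Rightarrow> ('a list + 'a list) \<Rightarrow> bool" where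
  "wenger_adj m x y = (case (x, y) of
      (Inl p, Inr l) \<Rightarrow> wenger_incident m p l
    | (Inr l, Inl p) \<Rightarrow> wenger_incident m p l
    | _ \<Rightarrow> False)"

text \<open>A fixed (arbitrary) enumeration of the vertices; the spectrum does not depend on it.\<close>
definition wenger_vertex_list :: "nat \<Rightarrow> ('a::{field,finite} list + 'a list) list" where
  "wenger_vertex_list m = (SOME xs. distinct xs \<and> set xs = wenger_vertices m)"

definition wenger_matrix :: "nat \<Rightarrow> ('a::{field,finite} itself) \<Rightarrow> real mat" where
  "wenger_matrix m (_ :: 'a itself) =
     (let vs = (wenger_vertex_list m :: ('a list + 'a list) list) in
      mat (length vs) (length vs)
        (\<lambda>(i, j). if wenger_adj m (vs ! i) (vs ! j) then 1 else 0))"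

definition wenger_mult :: "nat \<Rightarrow> nat \<Rightarrow> nat \<Rightarrow> int" where
  "wenger_mult q m i = (int q - 1) * int (q choose i) *
     (\<Sum>d = i..m. \<Sum>k = 0..d - i. (-1) ^ k * int ((q - i) choose k) * int q ^ (d - i - k))"

end

theory Submission
  imports Defs
begin

lemma sum_nth_distinct:
  assumes "distinct vs"
  shows "(\<Sum>i<length vs. g (vs ! i)) = (\<Sum>w\<in>set vs. g w)"
  using sum.reindex_bij_betw[OF bij_betw_nth[OF assms refl refl], of g] by simp

lemma spectral_char_poly:
  fixes R :: "'v \<Rightarrow> 'v \<Rightarrow> real" and f :: "'j \<Rightarrow> 'v \<Rightarrow> complex"
    and d :: "'j \<Rightarrow> real" and c :: "'j \<Rightarrow> complex"
  assumes vs: "distinct vs" and J: "finite J" "card J = length vs"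
    and eig: "\<And>j v. j \<in> J \<Longrightarrow> v \<in> set vs \<Longrightarrow>
        (\<Sum>w\<in>set vs. complex_of_real (R v w) * f j w) = complex_of_real (d j) * f j v"
    and orth: "\<And>j j'. j \<in> J \<Longrightarrow> j' \<in> J \<Longrightarrow>
        (\<Sum>v\<in>set vs. cnj (f j v) * f j' v) = (if j = j' then c j else 0)"
    and cnz: "\<And>j. j \<in> J \<Longrightarrow> c j \<noteq> 0"
  shows "char_poly (map_mat complex_of_real (mat (length vs) (length vs) (\<lambda>(i,k). R (vs!i) (vs!k))))
         = (\<Prod>j\<in>J. [:- complex_of_real (d j), 1:])"
proof -
  define n where "n = length vs"
  obtain js where js: "distinct js" "set js = J"
    using J(1) finite_distinct_list by blast
  have ljs: "length js = n" using J js distinct_card n_def by fastforce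
  define A where "A = map_mat complex_of_real (mat n n (\<lambda>(i,k). R (vs!i) (vs!k)))"
  define P where "P = mat n n (\<lambda>(i,k). f (js!k) (vs!i))"
  define Q where "Q = mat n n (\<lambda>(k,i). cnj (f (js!k) (vs!i)) / c (js!k))"
  define D where "D = mat n n (\<lambda>(i,k). if i = k then complex_of_real (d (js!i)) else 0)"
  have A: "A \<in> carrier_mat n n" and P: "P \<in> carrier_mat n n" and Q: "Q \<in> carrier_mat n n"
    and D: "D \<in> carrier_mat n n" by (auto simp: A_def P_def Q_def D_def)
  have jsJ: "k < n \<Longrightarrow> js ! k \<in> J" for k using js ljs by auto
  have vsV: "i < n \<Longrightarrow> vs ! i \<in> set vs" for i using n_def by auto
  have QP: "Q * P = 1\<^sub>m n"
  proof (rule eq_matI)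
    fix k k' assume k: "k < dim_row (1\<^sub>m n)" and k': "k' < dim_col (1\<^sub>m n)"
    hence kn: "k < n" "k' < n" by auto
    have "(Q * P) $$ (k, k') = (\<Sum>i<n. cnj (f (js!k) (vs!i)) / c (js!k) * f (js!k') (vs!i))"
      using kn by (simp add: Q_def P_def scalar_prod_def sum.atLeast0_lessThan_Suc lessThan_atLeast0)
    also have "\<dots> = (\<Sum>i<n. cnj (f (js!k) (vs!i)) * f (js!k') (vs!i)) / c (js!k)"
      by (simp add: sum_divide_distrib)
    also have "\<dots> = (\<Sum>v\<in>set vs. cnj (f (js!k) v) * f (js!k') v) / c (js!k)"
      using sum_nth_distinct[OF vs, of "\<lambda>v. cnj (f (js!k) v) * f (js!k') v"] n_def by simp
    also have "\<dots> = (if k = k' then 1 else 0)"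
      using orth[OF jsJ jsJ, OF kn] cnz[OF jsJ[OF kn(1)]] nth_eq_iff_index_eq[OF js(1)] ljs kn by auto
    finally show "(Q * P) $$ (k, k') = 1\<^sub>m n $$ (k, k')" using kn by simp
  qed (auto simp: Q_def P_def)
  have PQ: "P * Q = 1\<^sub>m n" using mat_mult_left_right_inverse[OF Q P QP] .
  have AP: "A * P = P * D"
  proof (rule eq_matI)
    fix i k assume i: "i < dim_row (P * D)" and k: "k < dim_col (P * D)"
    hence ik: "i < n" "k < n" using P D by auto
    have "(A * P) $$ (i, k) = (\<Sum>t<n. complex_of_real (R (vs!i) (vs!t)) * f (js!k) (vs!t))"
      using ik by (simp add: A_def P_def scalar_prod_def sum.atLeast0_lessThan_Suc lessThan_atLeast0)
    also have "\<dots> = (\<Sum>w\<in>set vs. complex_of_real (R (vs!i) w) * f (js!k) w)"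
      using sum_nth_distinct[OF vs, of "\<lambda>w. complex_of_real (R (vs!i) w) * f (js!k) w"] n_def by simp
    also have "\<dots> = complex_of_real (d (js!k)) * f (js!k) (vs!i)"
      using eig[OF jsJ vsV] ik by simp
    also have "\<dots> = (P * D) $$ (i, k)"
    proof -
      have "(P * D) $$ (i, k) = (\<Sum>t<n. f (js!t) (vs!i) * (if t = k then complex_of_real (d (js!t)) else 0))"
        using ik by (simp add: D_def P_def scalar_prod_def sum.atLeast0_lessThan_Suc lessThan_atLeast0)
      also have "\<dots> = f (js!k) (vs!i) * complex_of_real (d (js!k))"
        using ik by (simp add: if_distrib[of "(*) _"] sum.delta cong: if_cong)
      finally show ?thesis by simp
    qed
    finally show "(A * P) $$ (i, k) = (P * D) $$ (i, k)" .
  qed (use A P D in auto)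
  have "A = P * D * Q"
  proof -
    have "A = A * (P * Q)" using A PQ by simp
    also have "\<dots> = A * P * Q" using A P Q by (simp add: assoc_mult_mat)
    also have "\<dots> = P * D * Q" using AP by simp
    finally show ?thesis .
  qed
  hence sim: "similar_mat A D"
    by (intro similar_matI[OF _ PQ QP, of A D]) (use A P Q D in auto)
  have ut: "upper_triangular D" by (auto simp: upper_triangular_def D_def)
  have "char_poly A = char_poly D" by (rule char_poly_similar[OF sim])
  also have "\<dots> = (\<Prod>a\<leftarrow>diag_mat D. [:- a, 1:])" by (rule char_poly_upper_triangular[OF D ut])
  also have "diag_mat D = map (\<lambda>j. complex_of_real (d j)) js"
    by (rule nth_equalityI) (auto simp: diag_mat_def D_def ljs)
  also have "(\<Prod>a\<leftarrow>map (\<lambda>j. complex_of_real (d j)) js. [:- a, 1:]) = (\<Prod>j\<in>J. [:- complex_of_real (d j), 1:])"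
    using js prod.distinct_set_conv_list[OF js(1), of "\<lambda>j. [:- complex_of_real (d j), 1:]"] by (simp add: comp_def)
  finally show ?thesis by (simp add: A_def n_def)
qed

lemma order_prod_linear:
  fixes d :: "'j \<Rightarrow> 'b::idom"
  assumes "finite J"
  shows "order x (\<Prod>j\<in>J. [:- d j, 1:]) = card {j\<in>J. d j = x}"
  using assms
proof (induction J rule: finite_induct)
  case empty
  then show ?case by (simp add: order_0I)
next
  case (insert j J)
  have nz: "(\<Prod>j\<in>J. [:- d j, 1:]) \<noteq> 0" by (simp add: prod_zero_iff insert)
  have l0: "[:- d j, 1:] \<noteq> 0" by simp
  have nz2: "[:- d j, 1:] * (\<Prod>j\<in>J. [:- d j, 1:]) \<noteq> 0" using nz l0 mult_eq_0_iff by blast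
  have "order x (\<Prod>j\<in>insert j J. [:- d j, 1:]) = order x [:- d j, 1:] + order x (\<Prod>j\<in>J. [:- d j, 1:])"
    using insert order_mult[OF nz2] by simp
  also have "order x [:- d j, 1:] = (if d j = x then 1 else 0)"
    using order_linear'[of x "- d j"] by auto
  finally have e: "order x (\<Prod>j\<in>insert j J. [:- d j, 1:]) = (if d j = x then 1 else 0) + card {j\<in>J. d j = x}"
    using insert by simp
  have "{i\<in>insert j J. d i = x} = (if d j = x then insert j {i\<in>J. d i = x} else {i\<in>J. d i = x})"
    by auto
  then show ?case using e insert by auto
qed

definition Lv :: "nat \<Rightarrow> 'a list set" where
  "Lv m = {l. length l = Suc m}"

fun rr :: "'a::field list \<Rightarrow> nat \<Rightarrow> 'a" where
  "rr p 0 = 0"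
| "rr p (Suc i) = p!0 * rr p i + p!(Suc i)"

definition line :: "nat \<Rightarrow> 'a::field list \<Rightarrow> 'a \<Rightarrow> 'a list" where
  "line m p t = map (\<lambda>i. t * (p!0)^i - rr p i) [0..<Suc m]"

definition pt :: "nat \<Rightarrow> 'a::field list \<Rightarrow> 'a \<Rightarrow> 'a list" where
  "pt m l s = map (\<lambda>i. if i = 0 then s else l!(i-1) * s - l!i) [0..<Suc m]"

definition vpow :: "nat \<Rightarrow> 'a::field \<Rightarrow> 'a list" where
  "vpow m s = map (\<lambda>i. s^i) [0..<Suc m]"

definition ladd :: "'a::field list \<Rightarrow> 'a \<Rightarrow> 'a list \<Rightarrow> 'a list" where
  "ladd v t u = map (\<lambda>i. v!i + t * u!i) [0..<length v]"

definition dot :: "nat \<Rightarrow> 'a::field poly \<Rightarrow> 'a list \<Rightarrow> 'a" where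
  "dot m P l = (\<Sum>i\<le>m. coeff P i * l!i)"

definition pc :: "nat \<Rightarrow> 'a::field list \<Rightarrow> 'a list" where
  "pc m p = map (\<lambda>i. if i = 0 then p!0 else rr p i) [0..<Suc m]"

lemma line_len[simp]: "length (line m p t) = Suc m" by (simp add: line_def)
lemma pt_len[simp]: "length (pt m l s) = Suc m" by (simp add: pt_def)
lemma vpow_len[simp]: "length (vpow m s) = Suc m" by (simp add: vpow_def)
lemma ladd_len[simp]: "length (ladd v t u) = length v" by (simp add: ladd_def)
lemma pc_len[simp]: "length (pc m p) = Suc m" by (simp add: pc_def)

lemma line_nth: "i \<le> m \<Longrightarrow> line m p t ! i = t * (p!0)^i - rr p i"
  by (simp add: line_def del: upt_Suc)
lemma pt_nth: "i \<le> m \<Longrightarrow> pt m l s ! i = (if i = 0 then s else l!(i-1) * s - l!i)"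
  by (simp add: pt_def del: upt_Suc)
lemma vpow_nth: "i \<le> m \<Longrightarrow> vpow m s ! i = s^i"
  by (simp add: vpow_def del: upt_Suc)
lemma ladd_nth: "i < length v \<Longrightarrow> ladd v t u ! i = v!i + t * u!i"
  by (simp add: ladd_def)
lemma pc_nth: "i \<le> m \<Longrightarrow> pc m p ! i = (if i = 0 then p!0 else rr p i)"
  by (simp add: pc_def del: upt_Suc)

lemma line_0[simp]: "line m p t ! 0 = t" by (simp add: line_nth)
lemma pt_0[simp]: "pt m l s ! 0 = s" by (simp add: pt_nth)

lemma Lv_eq_len: "l \<in> Lv m \<longleftrightarrow> length l = Suc m" by (simp add: Lv_def)

lemma line_incident: "wenger_incident m p (line m p t)"
  unfolding wenger_incident_def
proof
  fix i assume i: "i \<in> {1..m}"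
  then obtain k where k: "i = Suc k" "k < m" by (cases i) auto
  show "line m p t ! i + p ! i = line m p t ! (i - 1) * p ! 0"
    using k by (simp add: line_nth algebra_simps)
qed

lemma pt_incident: "wenger_incident m (pt m l s) l"
  unfolding wenger_incident_def
  by (auto simp: pt_nth)

lemma incident_line:
  assumes "l \<in> Lv m" "wenger_incident m p l"
  shows "l = line m p (l!0)"
proof -
  have "\<forall>i\<le>m. l!i = l!0 * (p!0)^i - rr p i"
  proof (intro allI impI)
    fix i assume "i \<le> m" thus "l!i = l!0 * (p!0)^i - rr p i"
    proof (induction i)
      case 0 then show ?case by simp
    next
      case (Suc k)
      have "Suc k \<in> {1..m}" using Suc.prems by auto
      then have "l ! Suc k + p ! Suc k = l ! (Suc k - 1) * p ! 0"
        using assms(2) unfolding wenger_incident_def by blast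
      then have "l ! Suc k + p ! Suc k = l ! k * p ! 0" by simp
      then have "l ! Suc k = l!k * p!0 - p ! Suc k" by (simp add: algebra_simps)
      then show ?case using Suc by (simp add: algebra_simps)
    qed
  qed
  note H = this
  show ?thesis
  proof (intro nth_equalityI)
    show "length l = length (line m p (l!0))" using assms(1) by (simp add: Lv_def)
    fix i assume "i < length l"
    then have i: "i \<le> m" using assms(1) by (simp add: Lv_def)
    have "l!i = l!0 * (p!0)^i - rr p i" using H i by blast
    then show "l!i = line m p (l!0) ! i" using i by (simp only: line_nth)
  qed
qed

lemma incident_pt:
  assumes "p \<in> Lv m" "wenger_incident m p l"
  shows "p = pt m l (p!0)"
proof (intro nth_equalityI)
  show "length p = length (pt m l (p!0))" using assms by (simp add: Lv_def)
  fix i assume "i < length p"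
  then have i: "i \<le> m" using assms by (simp add: Lv_def)
  show "p ! i = pt m l (p!0) ! i"
  proof (cases i)
    case 0 then show ?thesis by simp
  next
    case (Suc k)
    then have "i \<in> {1..m}" using i by auto
    then have "l ! i + p ! i = l ! (i-1) * p ! 0" using assms(2) unfolding wenger_incident_def by blast
    then have "p ! i = l ! (i-1) * p ! 0 - l ! i" by (simp add: eq_diff_eq add.commute)
    then show ?thesis using i Suc by (simp add: pt_nth)
  qed
qed

lemma rr_pt: "i \<le> m \<Longrightarrow> rr (pt m l s) i = l!0 * s^i - l!i"
proof (induction i)
  case 0 then show ?case by simp
next
  case (Suc k)
  then have ih: "rr (pt m l s) k = l!0 * s^k - l!k" by simp
  show ?case using Suc.prems by (simp add: pt_nth ih algebra_simps)
qed

lemma line_pt: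
  assumes "l \<in> Lv m"
  shows "line m (pt m l s) t = ladd l (t - l!0) (vpow m s)"
  using assms by (intro nth_equalityI) (auto simp: Lv_def line_nth ladd_nth vpow_nth rr_pt algebra_simps)

lemma line_shift: "line m p t = ladd (line m p 0) t (vpow m (p!0))"
  by (intro nth_equalityI) (auto simp: line_nth ladd_nth vpow_nth algebra_simps)

lemma dot_ladd:
  assumes "length v = Suc m"
  shows "dot m P (ladd v t u) = dot m P v + t * dot m P u"
  using assms by (simp add: dot_def ladd_nth sum.distrib sum_distrib_left algebra_simps)

lemma dot_vpow:
  assumes "degree P \<le> m"
  shows "dot m P (vpow m s) = poly P s"
proof -
  have "poly P s = (\<Sum>i\<le>degree P. coeff P i * s^i)" by (simp add: poly_altdef)
  also have "\<dots> = (\<Sum>i\<le>m. coeff P i * s^i)"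
    by (rule sum.mono_neutral_left) (use assms le_degree in auto)
  finally show ?thesis by (simp add: dot_def vpow_nth)
qed

lemma dot_pc_pt:
  assumes "coeff A 0 = 0" "degree A \<le> m"
  shows "dot m A (pc m (pt m l s)) = l!0 * poly A s - dot m A l"
proof -
  have "dot m A (pc m (pt m l s)) = (\<Sum>i\<le>m. coeff A i * (l!0 * s^i - l!i))"
    unfolding dot_def
    by (rule sum.cong) (use assms(1) in \<open>auto simp: pc_nth rr_pt\<close>)
  also have "\<dots> = l!0 * (\<Sum>i\<le>m. coeff A i * s^i) - dot m A l"
    by (simp add: dot_def algebra_simps sum_subtractf sum_distrib_left)
  also have "(\<Sum>i\<le>m. coeff A i * s^i) = poly A s"
    using dot_vpow[OF assms(2), of s] by (simp add: dot_def vpow_nth)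
  finally show ?thesis .
qed

lemma line_inj: "inj (line m p)"
  by (metis injI line_0)
lemma pt_inj: "inj (pt m l)"
  by (metis injI pt_0)

lemma nbr_lines:
  assumes "p \<in> Lv m"
  shows "{l \<in> Lv m. wenger_incident m p l} = range (line m p)"
proof (intro equalityI subsetI)
  fix l assume "l \<in> {l \<in> Lv m. wenger_incident m p l}"
  then have "l = line m p (l!0)" using incident_line by blast
  then show "l \<in> range (line m p)" by (metis rangeI)
next
  fix l assume "l \<in> range (line m p)"
  then obtain t where "l = line m p t" by auto
  then show "l \<in> {l \<in> Lv m. wenger_incident m p l}" using line_incident by (simp add: Lv_def)
qed

lemma nbr_points:
  assumes "l \<in> Lv m"
  shows "{p \<in> Lv m. wenger_incident m p l} = range (pt m l)"
proof (intro equalityI subsetI)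
  fix p assume "p \<in> {p \<in> Lv m. wenger_incident m p l}"
  then have "p = pt m l (p!0)" using incident_pt by blast
  then show "p \<in> range (pt m l)" by (metis rangeI)
next
  fix p assume "p \<in> range (pt m l)"
  then obtain s where "p = pt m l s" by auto
  then show "p \<in> {p \<in> Lv m. wenger_incident m p l}" using pt_incident by (simp add: Lv_def)
qed

lemma sum_nbr_lines:
  assumes "p \<in> Lv m"
  shows "(\<Sum>l\<in>{l \<in> Lv m. wenger_incident m p l}. F l) = (\<Sum>t\<in>(UNIV::'a::{field,finite} set). F (line m p t))"
  unfolding nbr_lines[OF assms] by (simp add: sum.reindex[OF line_inj])

lemma sum_nbr_points:
  assumes "l \<in> Lv m"
  shows "(\<Sum>p\<in>{p \<in> Lv m. wenger_incident m p l}. F p) = (\<Sum>s\<in>(UNIV::'a::{field,finite} set). F (pt m l s))"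
  unfolding nbr_points[OF assms] by (simp add: sum.reindex[OF pt_inj])

lemma finite_Lv[simp]: "finite (Lv m :: 'a::finite list set)"
proof -
  show ?thesis unfolding Lv_def using finite_lists_length_eq[of "UNIV::'a set" "Suc m"] by simp
qed

lemma card_Lv: "card (Lv m :: 'a::finite list set) = card (UNIV :: 'a set) ^ Suc m"
proof -
  show ?thesis unfolding Lv_def using card_lists_length_eq[of "UNIV::'a set" "Suc m"] by simp
qed

lemma adjoint_sum:
  fixes G :: "'a::{field,finite} list \<Rightarrow> 'a list \<Rightarrow> 'b::comm_monoid_add"
  shows "(\<Sum>p\<in>Lv m. \<Sum>t\<in>UNIV. G p (line m p t)) = (\<Sum>l\<in>Lv m. \<Sum>s\<in>UNIV. G (pt m l s) l)"
proof -
  have "(\<Sum>p\<in>Lv m. \<Sum>t\<in>UNIV. G p (line m p t)) = (\<Sum>p\<in>Lv m. \<Sum>l\<in>{l \<in> Lv m. wenger_incident m p l}. G p l)"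
    by (simp add: sum_nbr_lines)
  also have "\<dots> = (\<Sum>p\<in>Lv m. \<Sum>l\<in>Lv m. if wenger_incident m p l then G p l else 0)"
    by (simp add: sum.inter_filter)
  also have "\<dots> = (\<Sum>l\<in>Lv m. \<Sum>p\<in>Lv m. if wenger_incident m p l then G p l else 0)"
    by (rule sum.swap)
  also have "\<dots> = (\<Sum>l\<in>Lv m. \<Sum>p\<in>{p \<in> Lv m. wenger_incident m p l}. G p l)"
    by (simp add: sum.inter_filter)
  also have "\<dots> = (\<Sum>l\<in>Lv m. \<Sum>s\<in>UNIV. G (pt m l s) l)"
    by (simp add: sum_nbr_points)
  finally show ?thesis .
qed

lemma rr_inj:
  assumes "p \<in> Lv m" "p' \<in> Lv m" "\<forall>i\<le>m. rr p i = rr p' i" "p!0 = p'!0"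
  shows "p = p'"
proof (intro nth_equalityI)
  show "length p = length p'" using assms by (simp add: Lv_def)
  fix i assume "i < length p"
  then have i: "i \<le> m" using assms by (simp add: Lv_def)
  show "p!i = p'!i"
  proof (cases i)
    case 0 then show ?thesis using assms by simp
  next
    case (Suc k)
    have ik: "Suc k \<le> m" "k \<le> m" using i Suc by auto
    have "rr p (Suc k) = rr p' (Suc k)" "rr p k = rr p' k" using assms(3) ik by blast+
    then have "p!0 * rr p k + p!Suc k = p'!0 * rr p' k + p'!Suc k" by simp
    then show ?thesis using Suc assms(4) \<open>rr p k = rr p' k\<close> by simp
  qed
qed

lemma pc_bij: "bij_betw (pc m) (Lv m) (Lv m :: 'a::{field,finite} list set)"
proof -
  have inj: "inj_on (pc m) (Lv m :: 'a list set)"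
  proof (rule inj_onI)
    fix p p' :: "'a list" assume a: "p \<in> Lv m" "p' \<in> Lv m" "pc m p = pc m p'"
    have "\<forall>i\<le>m. pc m p ! i = pc m p' ! i" using a by simp
    have e0: "p!0 = p'!0" using spec[OF \<open>\<forall>i\<le>m. pc m p ! i = pc m p' ! i\<close>, of 0] by (simp add: pc_nth)
    have "\<forall>i\<le>m. rr p i = rr p' i"
    proof (intro allI impI)
      fix i assume i: "i \<le> m"
      show "rr p i = rr p' i"
      proof (cases i)
        case 0 then show ?thesis by simp
      next
        case (Suc k)
        then show ?thesis using spec[OF \<open>\<forall>i\<le>m. pc m p ! i = pc m p' ! i\<close>, of i] i by (simp add: pc_nth)
      qed
    qed
    then have "\<forall>i\<le>m. rr p i = rr p' i" "p!0 = p'!0" using e0 by auto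
    then show "p = p'" using rr_inj a by blast
  qed
  have sub: "pc m ` Lv m \<subseteq> (Lv m :: 'a list set)" by (auto simp: Lv_def)
  have "card (pc m ` (Lv m :: 'a list set)) = card (Lv m :: 'a list set)" using card_image[OF inj] .
  then have "pc m ` (Lv m :: 'a list set) = (Lv m :: 'a list set)" using sub by (intro card_subset_eq) auto
  then show ?thesis using inj by (simp add: bij_betw_def)
qed

definition dft :: "nat \<Rightarrow> nat \<Rightarrow> nat \<Rightarrow> complex" where
  "dft n j t = cis (2 * pi * real j / real n) ^ t"

lemma dft_0[simp]: "dft n 0 t = 1" by (simp add: dft_def)

lemma dft_norm: "cnj (dft n j t) * dft n j t = 1"
proof -
  have "cnj (dft n j t) * dft n j t = of_real ((cmod (dft n j t))^2)"
    using complex_norm_square[of "dft n j t"] by (simp add: mult.commute)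
  also have "cmod (dft n j t) = 1" by (simp add: dft_def norm_power)
  finally show ?thesis by simp
qed

lemma dft_orth:
  assumes n: "0 < n" and j: "j < n" and j': "j' < n"
  shows "(\<Sum>t<n. cnj (dft n j t) * dft n j' t) = (if j = j' then of_nat n else 0)"
proof -
  define w where "w = (\<lambda>k. cis (2 * pi * real k / real n))"
  have bij: "bij_betw w {..<n} {z. z ^ n = 1}" using bij_betw_roots_unity[OF n] by (simp add: w_def)
  define z where "z = cnj (w j) * w j'"
  have tm: "cnj (dft n j t) * dft n j' t = z ^ t" for t
    by (simp add: dft_def z_def w_def power_mult_distrib)
  have zdiv: "z = w j' / w j"
    by (simp add: z_def w_def cis_cnj cis_mult cis_divide algebra_simps)
  have wnz: "w j \<noteq> 0" by (simp add: w_def)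
  show ?thesis
  proof (cases "j = j'")
    case True
    then have "z = 1" using zdiv wnz by simp
    then show ?thesis using True by (simp add: dft_norm)
  next
    case False
    have "w j \<noteq> w j'" using bij False j j' unfolding bij_betw_def inj_on_def by blast
    then have z1: "z \<noteq> 1" using zdiv wnz by auto
    have "w j ^ n = 1" "w j' ^ n = 1" using bij j j' unfolding bij_betw_def by auto
    then have "z ^ n = 1" by (simp add: zdiv power_divide)
    then show ?thesis using False z1 by (simp add: tm sum_gp_strict)
  qed
qed

lemma dft_sum_zero:
  assumes "0 < j" "j < n"
  shows "(\<Sum>t<n. dft n j t) = 0"
  using dft_orth[of n 0 j] assms by simp

definition ix :: "'x set \<Rightarrow> 'x \<Rightarrow> nat" where
  "ix X = (SOME f. bij_betw f X {0..<card X})"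

lemma ix_bij: "finite X \<Longrightarrow> bij_betw (ix X) X {..<card X}"
  unfolding ix_def using someI_ex[OF ex_bij_betw_finite_nat] by (simp add: atLeast0LessThan)

lemma sum_ix:
  assumes "finite X"
  shows "(\<Sum>x\<in>X. g (ix X x)) = (\<Sum>t<card X. g t)"
  using sum.reindex_bij_betw[OF ix_bij[OF assms], of g] by simp

definition kk :: "'a::{zero,finite} \<Rightarrow> nat" where
  "kk x = (let f = ix (UNIV::'a set) in
     if f x = f 0 then 0 else if f x = 0 then f 0 else f x)"

lemma kk_props:
  fixes x y :: "'a::{zero,finite}"
  shows "kk x < card (UNIV::'a set)" "kk x = 0 \<longleftrightarrow> x = 0" "kk x = kk y \<longleftrightarrow> x = y"
proof -
  let ?f = "ix (UNIV::'a set)"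
  have b: "bij_betw ?f UNIV {..<card (UNIV::'a set)}" by (rule ix_bij) simp
  have inj: "?f a = ?f b \<longleftrightarrow> a = b" for a b using b unfolding bij_betw_def inj_on_def by blast
  have lt: "?f a < card (UNIV::'a set)" for a using b unfolding bij_betw_def by auto
  show "kk x < card (UNIV::'a set)" using lt[of x] lt[of 0] by (auto simp: kk_def Let_def)
  show "kk x = 0 \<longleftrightarrow> x = 0" using inj[of x 0] by (auto simp: kk_def Let_def)
  show "kk x = kk y \<longleftrightarrow> x = y" using inj[of x y] inj[of x 0] inj[of y 0] inj[of 0 x] inj[of 0 y]
    by (auto simp: kk_def Let_def split: if_splits)
qed

definition hh :: "'a::{zero,finite} \<Rightarrow> 'a \<Rightarrow> complex" where
  "hh x s = dft (card (UNIV::'a set)) (kk x) (ix (UNIV::'a set) s)"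

lemma hh_0[simp]: "hh 0 s = 1"
  using kk_props(2)[of "0::'a"] by (simp add: hh_def)

lemma hh_norm: "cnj (hh x s) * hh x s = 1" by (simp add: hh_def dft_norm)

lemma hh_orth:
  fixes x y :: "'a::{zero,finite}"
  shows "(\<Sum>s\<in>UNIV. cnj (hh x s) * hh y s) = (if x = y then of_nat (card (UNIV::'a set)) else 0)"
proof -
  have "(\<Sum>s\<in>UNIV. cnj (hh x s) * hh y s)
      = (\<Sum>t<card (UNIV::'a set). cnj (dft (card (UNIV::'a set)) (kk x) t) * dft (card (UNIV::'a set)) (kk y) t)"
    unfolding hh_def by (rule sum_ix) simp
  also have "\<dots> = (if x = y then of_nat (card (UNIV::'a set)) else 0)"
    using dft_orth[OF _ kk_props(1) kk_props(1), of x y] kk_props(3)[of x y] finite_UNIV_card_ge_0[where 'a='a]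
    by simp
  finally show ?thesis .
qed

lemma hh_sum_zero:
  fixes x :: "'a::{zero,finite}"
  assumes "x \<noteq> 0"
  shows "(\<Sum>s\<in>UNIV. hh x s) = 0"
  using hh_orth[of 0 x] assms by simp

definition KK :: "'a::{field,finite} poly \<Rightarrow> 'a \<Rightarrow> complex" where
  "KK P b = hh (lead_coeff P) (b / lead_coeff P)"

definition dir :: "nat \<Rightarrow> 'a::{field,finite} poly \<Rightarrow> 'a list \<Rightarrow> complex" where
  "dir m P v = KK P (dot m P v)"

lemma KK_0[simp]: "KK 0 b = 1" by (simp add: KK_def)

lemma dir_norm: "cnj (dir m P v) * dir m P v = 1" by (simp add: dir_def KK_def hh_norm)

lemma sum_affine:
  fixes g :: "'a::{field,finite} \<Rightarrow> 'b::comm_monoid_add"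
  assumes "a \<noteq> 0"
  shows "(\<Sum>t\<in>UNIV. g (a * t + b)) = (\<Sum>s\<in>UNIV. g s)"
proof -
  have inj: "inj (\<lambda>t. a * t + b)" using assms by (intro injI) simp
  then have "range (\<lambda>t. a * t + b) = UNIV" by (simp add: finite_UNIV_inj_surj)
  then show ?thesis using sum.reindex[OF inj, of g] by (simp add: comp_def)
qed

lemma KK_sum_zero:
  assumes "P \<noteq> 0" "c \<noteq> 0"
  shows "(\<Sum>t\<in>UNIV. KK P (b + t * c)) = 0"
proof -
  let ?l = "lead_coeff P"
  have l: "?l \<noteq> 0" using assms by simp
  have "(\<Sum>t\<in>UNIV. KK P (b + t * c)) = (\<Sum>t\<in>UNIV. hh ?l ((c / ?l) * t + b / ?l))"
    by (simp add: KK_def add_divide_distrib algebra_simps)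
  also have "\<dots> = (\<Sum>s\<in>UNIV. hh ?l s)" by (rule sum_affine) (use assms l in simp)
  also have "\<dots> = 0" by (rule hh_sum_zero[OF l])
  finally show ?thesis .
qed

lemma ladd_bij:
  assumes "u \<in> Lv m"
  shows "bij_betw (\<lambda>v. ladd v t u) (Lv m) (Lv m :: 'a::{field,finite} list set)"
proof -
  have inj: "inj_on (\<lambda>v. ladd v t u) (Lv m :: 'a list set)"
  proof (rule inj_onI)
    fix v v' :: "'a list" assume a: "v \<in> Lv m" "v' \<in> Lv m" "ladd v t u = ladd v' t u"
    show "v = v'"
    proof (rule nth_equalityI)
      show "length v = length v'" using a by (simp add: Lv_def)
      fix i assume "i < length v"
      then have il: "i < length v" "i < length v'" using a by (auto simp: Lv_def)
      have "ladd v t u ! i = ladd v' t u ! i" using a(3) by simp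
      then show "v!i = v'!i" using il by (simp add: ladd_nth)
    qed
  qed
  have sub: "(\<lambda>v. ladd v t u) ` (Lv m :: 'a list set) \<subseteq> Lv m" by (auto simp: Lv_def)
  have "card ((\<lambda>v. ladd v t u) ` (Lv m :: 'a list set)) = card (Lv m :: 'a list set)" by (rule card_image[OF inj])
  then have "(\<lambda>v. ladd v t u) ` (Lv m :: 'a list set) = Lv m" using sub by (intro card_subset_eq) auto
  then show ?thesis using inj by (simp add: bij_betw_def)
qed

lemma shift_zero:
  fixes F :: "'a::{field,finite} list \<Rightarrow> complex"
  assumes u: "u \<in> Lv m" and z: "\<And>v. v \<in> Lv m \<Longrightarrow> (\<Sum>t\<in>UNIV. F (ladd v t u)) = 0"
  shows "(\<Sum>v\<in>Lv m. F v) = 0"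
proof -
  have e: "(\<Sum>v\<in>Lv m. F v) = (\<Sum>v\<in>Lv m. F (ladd v t u))" for t
    using sum.reindex_bij_betw[OF ladd_bij[OF u, of t], of F] by simp
  have "of_nat (card (UNIV::'a set)) * (\<Sum>v\<in>Lv m. F v) = (\<Sum>t\<in>(UNIV::'a set). \<Sum>v\<in>Lv m. F v)"
    by simp
  also have "\<dots> = (\<Sum>t\<in>(UNIV::'a set). \<Sum>v\<in>Lv m. F (ladd v t u))" using e by simp
  also have "\<dots> = (\<Sum>v\<in>Lv m. \<Sum>t\<in>UNIV. F (ladd v t u))" by (rule sum.swap)
  also have "\<dots> = 0" using z by simp
  finally show ?thesis by simp
qed

definition uv :: "nat \<Rightarrow> (nat \<Rightarrow> 'a) \<Rightarrow> 'a list" where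
  "uv m f = map f [0..<Suc m]"

lemma uv_Lv[simp]: "uv m f \<in> Lv m" by (simp add: uv_def Lv_def)
lemma uv_nth: "i \<le> m \<Longrightarrow> uv m f ! i = f i" by (simp add: uv_def del: upt_Suc)

lemma dot_uv: "dot m P (uv m f) = (\<Sum>i\<le>m. coeff P i * f i)"
  by (simp add: dot_def uv_nth)

lemma dot_unit:
  assumes "d \<le> m"
  shows "dot m P (uv m (\<lambda>i. if i = d then 1 else 0)) = coeff P d"
  using assms by (simp add: dot_uv if_distrib[of "(*) _"] sum.delta cong: if_cong)

lemma dot_two:
  assumes "i \<le> m" "j \<le> m" "i \<noteq> j"
  shows "dot m P (uv m (\<lambda>k. if k = i then a else if k = j then b else 0)) = coeff P i * a + coeff P j * b"
proof -
  have "(\<Sum>k\<le>m. coeff P k * (if k = i then a else if k = j then b else 0))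
      = (\<Sum>k\<le>m. (if k = i then coeff P i * a else 0) + (if k = j then coeff P j * b else 0))"
    by (rule sum.cong) (use assms in auto)
  also have "\<dots> = coeff P i * a + coeff P j * b" using assms by (simp add: sum.distrib)
  finally show ?thesis by (simp add: dot_uv)
qed

lemma dot_smult: "dot m (Polynomial.smult a P) v = a * dot m P v"
  by (simp add: dot_def sum_distrib_left algebra_simps)

lemma ladd_0: "i < length v \<Longrightarrow> ladd v t u ! i = v!i + t * u!i" by (rule ladd_nth)

lemma minor_exists:
  fixes P P' :: "'a::field poly"
  assumes "P \<noteq> 0" "degree P \<le> m" "degree P' \<le> m" "\<not> (\<exists>a. P' = Polynomial.smult a P)"
  shows "\<exists>i\<le>m. \<exists>j\<le>m. coeff P i * coeff P' j \<noteq> coeff P j * coeff P' i"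
proof (rule ccontr)
  assume "\<not> ?thesis"
  then have H: "\<And>i j. i \<le> m \<Longrightarrow> j \<le> m \<Longrightarrow> coeff P i * coeff P' j = coeff P j * coeff P' i" by blast
  define d where "d = degree P"
  have l: "coeff P d \<noteq> 0" using assms(1) by (simp add: d_def)
  have "P' = Polynomial.smult (coeff P' d / coeff P d) P"
  proof (rule poly_eqI)
    fix i
    show "coeff P' i = coeff (Polynomial.smult (coeff P' d / coeff P d) P) i"
    proof (cases "i \<le> m")
      case True
      have "coeff P i * coeff P' d = coeff P d * coeff P' i" using H[OF True] assms(2) d_def by simp
      then show ?thesis using l by (simp add: field_simps)
    next
      case False
      then have "coeff P i = 0" "coeff P' i = 0" using assms(2,3) by (auto intro: coeff_eq_0)
      then show ?thesis by simp
    qed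
  qed
  then show False using assms(4) by blast
qed

lemma sum_Lv_hd:
  fixes W :: "'a::finite \<Rightarrow> 'b::comm_semiring_1"
  shows "(\<Sum>v\<in>Lv m. W (v!0)) = of_nat (card (UNIV::'a set) ^ m) * (\<Sum>x\<in>UNIV. W x)"
proof -
  let ?R = "{r :: 'a list. length r = m}"
  have fin: "finite ?R" using finite_lists_length_eq[of "UNIV::'a set" m] by simp
  have cR: "card ?R = card (UNIV::'a set) ^ m" using card_lists_length_eq[of "UNIV::'a set" m] by simp
  have inj: "inj_on (\<lambda>(x, r). x # r) (UNIV \<times> ?R)" by (auto simp: inj_on_def)
  have img: "(\<lambda>(x, r). x # r) ` (UNIV \<times> ?R) = Lv m"
  proof (intro equalityI subsetI)
    fix v :: "'a list" assume "v \<in> Lv m"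
    then obtain x r where "v = x # r" "length r = m" by (cases v) (auto simp: Lv_def)
    then show "v \<in> (\<lambda>(x, r). x # r) ` (UNIV \<times> ?R)" by auto
  qed (auto simp: Lv_def)
  have "(\<Sum>v\<in>Lv m. W (v!0)) = (\<Sum>(x, r)\<in>UNIV \<times> ?R. W x)"
    using sum.reindex[OF inj, of "\<lambda>v. W (v!0)"] img by (simp add: case_prod_beta comp_def)
  also have "\<dots> = (\<Sum>x\<in>UNIV. \<Sum>r\<in>?R. W x)" by (rule sum.cartesian_product[symmetric])
  also have "\<dots> = (\<Sum>x\<in>UNIV. of_nat (card ?R) * W x)" by simp
  also have "\<dots> = of_nat (card (UNIV::'a set) ^ m) * (\<Sum>x\<in>UNIV. W x)" by (simp add: cR sum_distrib_left)
  finally show ?thesis .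
qed

lemma dir_same:
  fixes W :: "'a::{field,finite} \<Rightarrow> complex"
  shows "(\<Sum>v\<in>Lv m. W (v!0) * (cnj (dir m P v) * dir m P v)) = of_nat (card (UNIV::'a set) ^ m) * (\<Sum>x\<in>UNIV. W x)"
  using sum_Lv_hd[of W m] by (simp add: dir_norm)

lemma dir_orth:
  fixes P P' :: "'a::{field,finite} poly" and W :: "'a \<Rightarrow> complex"
  assumes dP: "degree P \<le> m" and dP': "degree P' \<le> m" and ne: "P \<noteq> P'"
    and zc: "(coeff P 0 = 0 \<and> coeff P' 0 = 0) \<or> (\<forall>x. W x = 1)"
  shows "(\<Sum>v\<in>Lv m. W (v!0) * (cnj (dir m P v) * dir m P' v)) = 0"
proof -
  define F where "F v = W (v!0) * (cnj (dir m P v) * dir m P' v)" for v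
  have Wsh: "W (ladd v t u ! 0) = W (v!0)" if "v \<in> Lv m" "u ! 0 = 0 \<or> (\<forall>x. W x = 1)" for v t u
    using that by (auto simp: Lv_def ladd_nth)
  have dl: "dot m Q (ladd v t u) = dot m Q v + t * dot m Q u" if "v \<in> Lv m" for Q v t u
    using that dot_ladd[of v m Q t u] by (simp add: Lv_def)
  have unit0: "d \<noteq> 0 \<Longrightarrow> d \<le> m \<Longrightarrow> uv m (\<lambda>i. if i = d then (1::'a) else 0) ! 0 = 0" for d
    by (simp add: uv_nth)
  have deg0: "Q \<noteq> 0 \<Longrightarrow> coeff Q 0 = 0 \<Longrightarrow> degree Q \<noteq> 0" for Q :: "'a poly"
    by (metis degree_0_id pCons_eq_0_iff coeff_pCons_0 pCons_0_0)
  show ?thesis unfolding F_def[symmetric]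
  proof (cases "P = 0 \<or> P' = 0")
    case True
    define Q where "Q = (if P = 0 then P' else P)"
    have Q: "Q \<noteq> 0" using True ne by (auto simp: Q_def)
    have dQ: "degree Q \<le> m" using dP dP' by (auto simp: Q_def)
    define u where "u = uv m (\<lambda>i. if i = degree Q then (1::'a) else 0)"
    have u: "u \<in> Lv m" by (simp add: u_def)
    have du: "dot m Q u = lead_coeff Q" using dot_unit[OF dQ] by (simp add: u_def)
    have u0: "u ! 0 = 0 \<or> (\<forall>x. W x = 1)"
    proof (cases "\<forall>x. W x = 1")
      case False
      then have "coeff Q 0 = 0" using zc by (auto simp: Q_def)
      then show ?thesis using deg0[OF Q] unit0[OF _ dQ] by (simp add: u_def)
    qed simp
    show "(\<Sum>v\<in>Lv m. F v) = 0"
    proof (rule shift_zero[OF u])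
      fix v :: "'a list" assume v: "v \<in> Lv m"
      have lc: "lead_coeff Q \<noteq> 0" using Q by simp
      show "(\<Sum>t\<in>UNIV. F (ladd v t u)) = 0"
      proof (cases "P = 0")
        case True
        have "(\<Sum>t\<in>UNIV. F (ladd v t u)) = W (v!0) * (\<Sum>t\<in>UNIV. KK P' (dot m P' v + t * lead_coeff P'))"
          using True Wsh[OF v u0] dl[OF v] du
          by (simp add: F_def dir_def Q_def sum_distrib_left)
        also have "\<dots> = 0" using KK_sum_zero[of P'] True ne by simp
        finally show ?thesis .
      next
        case False
        then have P'0: "P' = 0" using \<open>P = 0 \<or> P' = 0\<close> by simp
        have "(\<Sum>t\<in>UNIV. F (ladd v t u)) = W (v!0) * cnj (\<Sum>t\<in>UNIV. KK P (dot m P v + t * lead_coeff P))"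
          using False P'0 Wsh[OF v u0] dl[OF v] du
          by (simp add: F_def dir_def Q_def sum_distrib_left)
        also have "\<dots> = 0" using KK_sum_zero[of P] False by simp
        finally show ?thesis .
      qed
    qed
  next
    case False
    then have P0: "P \<noteq> 0" and P'0: "P' \<noteq> 0" by auto
    show "(\<Sum>v\<in>Lv m. F v) = 0"
    proof (cases "\<exists>a. P' = Polynomial.smult a P")
      case True
      then obtain a where a: "P' = Polynomial.smult a P" by blast
      have a0: "a \<noteq> 0" using a P'0 by auto
      have a1: "a \<noteq> 1" using a ne by auto
      define u where "u = uv m (\<lambda>i. if i = degree P then (1::'a) else 0)"
      have u: "u \<in> Lv m" by (simp add: u_def)
      have du: "dot m P u = lead_coeff P" using dot_unit[OF dP] by (simp add: u_def)
      have u0: "u ! 0 = 0 \<or> (\<forall>x. W x = 1)"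
      proof (cases "\<forall>x. W x = 1")
        case False
        then have "coeff P 0 = 0" using zc by auto
        then show ?thesis using deg0[OF P0] unit0[OF _ dP] by (simp add: u_def)
      qed simp
      let ?l = "lead_coeff P"
      have l: "?l \<noteq> 0" using P0 by simp
      have lc': "lead_coeff P' = a * ?l" using a by simp
      show ?thesis
      proof (rule shift_zero[OF u])
        fix v :: "'a list" assume v: "v \<in> Lv m"
        have e: "F (ladd v t u) = W (v!0) * (cnj (hh ?l (1 * t + dot m P v / ?l)) * hh (a * ?l) (1 * t + dot m P v / ?l))" for t
        proof -
          have "dot m P (ladd v t u) / ?l = t + dot m P v / ?l"
            using dl[OF v] du l by (simp add: field_simps)
          moreover have "dot m P' (ladd v t u) / lead_coeff P' = t + dot m P v / ?l"
            using dl[OF v] du l a0 by (simp add: a dot_smult field_simps)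
          ultimately show ?thesis using Wsh[OF v u0] lc' by (simp add: F_def dir_def KK_def)
        qed
        have "(\<Sum>t\<in>UNIV. F (ladd v t u)) = W (v!0) * (\<Sum>t\<in>UNIV. cnj (hh ?l (1 * t + dot m P v / ?l)) * hh (a * ?l) (1 * t + dot m P v / ?l))"
          by (simp add: e sum_distrib_left)
        also have "(\<Sum>t\<in>UNIV. cnj (hh ?l (1 * t + dot m P v / ?l)) * hh (a * ?l) (1 * t + dot m P v / ?l))
            = (\<Sum>s\<in>UNIV. cnj (hh ?l s) * hh (a * ?l) s)"
          by (rule sum_affine[of 1 "\<lambda>s. cnj (hh ?l s) * hh (a * ?l) s"]) simp
        also have "\<dots> = 0" using hh_orth[of ?l "a * ?l"] l a1 by simp
        finally show "(\<Sum>t\<in>UNIV. F (ladd v t u)) = 0" by simp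
      qed
    next
      case False
      obtain i j where ij: "i \<le> m" "j \<le> m" "coeff P i * coeff P' j \<noteq> coeff P j * coeff P' i"
        using minor_exists[OF P0 dP dP' False] by blast
      have inj: "i \<noteq> j" using ij by auto
      define u where "u = uv m (\<lambda>k. if k = i then coeff P j else if k = j then - coeff P i else 0)"
      have u: "u \<in> Lv m" by (simp add: u_def)
      have duP: "dot m P u = 0" using dot_two[OF ij(1,2) inj, of P "coeff P j" "- coeff P i"] by (simp add: u_def algebra_simps)
      have e': "dot m P' u = coeff P' i * coeff P j + coeff P' j * (- coeff P i)"
        using dot_two[OF ij(1,2) inj, of P' "coeff P j" "- coeff P i"] by (simp add: u_def)
      have ne': "coeff P' i * coeff P j \<noteq> coeff P' j * coeff P i" using ij(3) by (simp add: mult.commute)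
      have duP': "dot m P' u \<noteq> 0"
      proof
        assume "dot m P' u = 0"
        then have "coeff P' i * coeff P j = coeff P' j * coeff P i" using e' by (simp add: algebra_simps)
        then show False using ne' by simp
      qed
      have u0: "u ! 0 = 0 \<or> (\<forall>x. W x = 1)"
      proof (cases "\<forall>x. W x = 1")
        case False
        then have c0: "coeff P 0 = 0" "coeff P' 0 = 0" using zc by auto
        have "i \<noteq> 0" using ij(3) c0 by (cases "i = 0") auto
        moreover have "j \<noteq> 0" using ij(3) c0 by (cases "j = 0") auto
        ultimately have "i \<noteq> 0" "j \<noteq> 0" by auto
        then show ?thesis by (simp add: u_def uv_nth)
      qed simp
      show ?thesis
      proof (rule shift_zero[OF u])
        fix v :: "'a list" assume v: "v \<in> Lv m"
        have "(\<Sum>t\<in>UNIV. F (ladd v t u)) = W (v!0) * cnj (dir m P v) * (\<Sum>t\<in>UNIV. KK P' (dot m P' v + t * dot m P' u))"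
          using Wsh[OF v u0] dl[OF v] duP by (simp add: F_def dir_def sum_distrib_left algebra_simps)
        also have "\<dots> = 0" using KK_sum_zero[OF P'0 duP'] by simp
        finally show "(\<Sum>t\<in>UNIV. F (ladd v t u)) = 0" .
      qed
    qed
  qed
qed

definition rts :: "'a::{field,finite} poly \<Rightarrow> nat" where
  "rts P = card {s. poly P s = 0}"

definition Nf :: "nat \<Rightarrow> 'a::{field,finite} poly \<Rightarrow> 'a list \<Rightarrow> complex" where
  "Nf m P p = (\<Sum>t\<in>UNIV. dir m P (line m p t))"

lemma sum_roots_indicator:
  fixes X :: complex and P :: "'a::{field,finite} poly"
  shows "(\<Sum>s\<in>UNIV. if poly P s = 0 then X else 0) = of_nat (rts P) * X"
proof -
  have "(\<Sum>s\<in>UNIV. if poly P s = 0 then X else 0) = (\<Sum>s\<in>{s. poly P s = 0}. X)"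
    by (simp add: sum.If_cases Int_def)
  then show ?thesis by (simp add: rts_def)
qed

lemma NN_eig:
  fixes P :: "'a::{field,finite} poly"
  assumes l: "l \<in> Lv m" and dP: "degree P \<le> m"
  shows "(\<Sum>s\<in>UNIV. Nf m P (pt m l s)) = of_nat (card (UNIV::'a set) * rts P) * dir m P l"
proof -
  have ll: "length l = Suc m" using l by (simp add: Lv_def)
  have inner: "Nf m P (pt m l s) = (if poly P s = 0 then of_nat (card (UNIV::'a set)) * dir m P l else 0)" for s
  proof -
    have e: "dir m P (line m (pt m l s) t) = KK P (dot m P l + (1 * t + - (l!0)) * poly P s)" for t
      unfolding dir_def line_pt[OF l] dot_ladd[OF ll] dot_vpow[OF dP] by simp
    show ?thesis
    proof (cases "poly P s = 0")
      case True
      have "Nf m P (pt m l s) = (\<Sum>t\<in>(UNIV::'a set). KK P (dot m P l))" using True by (simp add: Nf_def e)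
      then show ?thesis using True by (simp add: dir_def)
    next
      case False
      then have P0: "P \<noteq> 0" by auto
      have "Nf m P (pt m l s) = (\<Sum>t\<in>UNIV. KK P (dot m P l + (1 * t + - (l!0)) * poly P s))"
        by (simp add: Nf_def e)
      also have "\<dots> = (\<Sum>t\<in>UNIV. KK P (dot m P l + t * poly P s))"
        by (rule sum_affine[of 1 "\<lambda>t. KK P (dot m P l + t * poly P s)"]) simp
      also have "\<dots> = 0" by (rule KK_sum_zero[OF P0 False])
      finally show ?thesis using False by simp
    qed
  qed
  show ?thesis unfolding inner sum_roots_indicator by simp
qed

lemma N_kernel:
  fixes P :: "'a::{field,finite} poly"
  assumes p: "p \<in> Lv m" and dP: "degree P \<le> m" and nz: "poly P (p!0) \<noteq> 0"
  shows "Nf m P p = 0"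
proof -
  have ll: "length (line m p 0) = Suc m" by simp
  have P0: "P \<noteq> 0" using nz by auto
  have "Nf m P p = (\<Sum>t\<in>UNIV. KK P (dot m P (line m p 0) + t * poly P (p!0)))"
    unfolding Nf_def dir_def
    by (subst line_shift) (simp add: dot_ladd[OF ll] dot_vpow[OF dP])
  also have "\<dots> = 0" by (rule KK_sum_zero[OF P0 nz])
  finally show ?thesis .
qed

lemma N_adjoint:
  fixes P :: "'a::{field,finite} poly" and G :: "'a list \<Rightarrow> complex"
  shows "(\<Sum>p\<in>Lv m. cnj (Nf m P p) * G p) = (\<Sum>l\<in>Lv m. cnj (dir m P l) * (\<Sum>s\<in>UNIV. G (pt m l s)))"
proof -
  have "(\<Sum>p\<in>Lv m. cnj (Nf m P p) * G p) = (\<Sum>p\<in>Lv m. \<Sum>t\<in>UNIV. cnj (dir m P (line m p t)) * G p)"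
    by (simp add: Nf_def sum_distrib_right)
  also have "\<dots> = (\<Sum>l\<in>Lv m. \<Sum>s\<in>UNIV. cnj (dir m P l) * G (pt m l s))"
    by (rule adjoint_sum[of "\<lambda>p l. cnj (dir m P l) * G p"])
  also have "\<dots> = (\<Sum>l\<in>Lv m. cnj (dir m P l) * (\<Sum>s\<in>UNIV. G (pt m l s)))"
    by (simp add: sum_distrib_left)
  finally show ?thesis .
qed

definition fib :: "'a::{field,finite} poly \<Rightarrow> 'a \<Rightarrow> 'a set" where
  "fib A c = {s. poly A s = c}"

definition gk :: "'a::{field,finite} poly \<Rightarrow> 'a \<Rightarrow> nat \<Rightarrow> 'a \<Rightarrow> complex" where
  "gk A c j x = (if poly A x = c then dft (card (fib A c)) j (ix (fib A c) x) else 0)"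

definition pk :: "nat \<Rightarrow> 'a::{field,finite} poly \<Rightarrow> 'a \<Rightarrow> nat \<Rightarrow> 'a list \<Rightarrow> complex" where
  "pk m A c j p = gk A c j (p!0) * dir m A (pc m p)"

lemma sum_fib:
  fixes f :: "'a::{field,finite} \<Rightarrow> complex"
  shows "(\<Sum>x\<in>UNIV. if poly A x = c then f x else 0) = (\<Sum>x\<in>fib A c. f x)"
  unfolding fib_def by (simp add: sum.If_cases Int_def)

lemma pc_0[simp]: "pc m p ! 0 = p ! 0" by (simp add: pc_nth)

lemma gk_sum:
  fixes X :: "'a::{field,finite} \<Rightarrow> complex"
  shows "(\<Sum>x\<in>UNIV. gk A c j x * X (poly A x)) = X c * (\<Sum>t<card (fib A c). dft (card (fib A c)) j t)"
proof -
  have "(\<Sum>x\<in>UNIV. gk A c j x * X (poly A x)) = (\<Sum>x\<in>UNIV. if poly A x = c then dft (card (fib A c)) j (ix (fib A c) x) * X c else 0)"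
    by (rule sum.cong) (auto simp: gk_def)
  also have "\<dots> = (\<Sum>x\<in>fib A c. dft (card (fib A c)) j (ix (fib A c) x) * X c)"
    by (rule sum_fib)
  also have "\<dots> = X c * (\<Sum>x\<in>fib A c. dft (card (fib A c)) j (ix (fib A c) x))"
    by (simp add: sum_distrib_left mult.commute)
  also have "(\<Sum>x\<in>fib A c. dft (card (fib A c)) j (ix (fib A c) x)) = (\<Sum>t<card (fib A c). dft (card (fib A c)) j t)"
    by (rule sum_ix) simp
  finally show ?thesis .
qed

lemma PK_eig:
  fixes A :: "'a::{field,finite} poly"
  assumes l: "l \<in> Lv m" and dA: "degree A \<le> m" and A0: "coeff A 0 = 0"
    and j: "0 < j" "j < card (fib A c)"
  shows "(\<Sum>s\<in>UNIV. pk m A c j (pt m l s)) = 0"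
proof -
  have "(\<Sum>s\<in>UNIV. pk m A c j (pt m l s)) = (\<Sum>s\<in>UNIV. gk A c j s * (\<lambda>y. KK A (l!0 * y - dot m A l)) (poly A s))"
    by (simp add: pk_def dir_def dot_pc_pt[OF A0 dA])
  also have "\<dots> = KK A (l!0 * c - dot m A l) * (\<Sum>t<card (fib A c). dft (card (fib A c)) j t)"
    by (rule gk_sum)
  also have "\<dots> = 0" using dft_sum_zero[OF j] by simp
  finally show ?thesis .
qed

lemma gk_orth:
  fixes A :: "'a::{field,finite} poly"
  assumes "j < card (fib A c)" "j' < card (fib A c')"
  shows "(\<Sum>x\<in>UNIV. cnj (gk A c j x) * gk A c' j' x) = (if c = c' \<and> j = j' then of_nat (card (fib A c)) else 0)"
proof (cases "c = c'")
  case True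
  have "(\<Sum>x\<in>UNIV. cnj (gk A c j x) * gk A c' j' x) = (\<Sum>x\<in>fib A c. cnj (dft (card (fib A c)) j (ix (fib A c) x)) * dft (card (fib A c)) j' (ix (fib A c) x))"
    unfolding True[symmetric]
  proof -
    have "(\<Sum>x\<in>UNIV. cnj (gk A c j x) * gk A c j' x) = (\<Sum>x\<in>UNIV. if poly A x = c then cnj (dft (card (fib A c)) j (ix (fib A c) x)) * dft (card (fib A c)) j' (ix (fib A c) x) else 0)"
      by (rule sum.cong) (auto simp: gk_def)
    also have "\<dots> = (\<Sum>x\<in>fib A c. cnj (dft (card (fib A c)) j (ix (fib A c) x)) * dft (card (fib A c)) j' (ix (fib A c) x))"
      by (rule sum_fib)
    finally show "(\<Sum>x\<in>UNIV. cnj (gk A c j x) * gk A c j' x) = (\<Sum>x\<in>fib A c. cnj (dft (card (fib A c)) j (ix (fib A c) x)) * dft (card (fib A c)) j' (ix (fib A c) x))" .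
  qed
  also have "\<dots> = (\<Sum>t<card (fib A c). cnj (dft (card (fib A c)) j t) * dft (card (fib A c)) j' t)"
    by (rule sum_ix[of "fib A c" "\<lambda>t. cnj (dft (card (fib A c)) j t) * dft (card (fib A c)) j' t"]) simp
  also have "\<dots> = (if j = j' then of_nat (card (fib A c)) else 0)"
    using assms True by (intro dft_orth) auto
  finally show ?thesis using True by simp
next
  case False
  then have z: "cnj (gk A c j x) * gk A c' j' x = 0" for x by (simp add: gk_def)
  have "(\<Sum>x\<in>UNIV. cnj (gk A c j x) * gk A c' j' x) = 0" by (simp only: z sum.neutral_const)
  then show ?thesis using False by simp
qed

lemma PK_orth:
  fixes A A' :: "'a::{field,finite} poly"
  assumes dA: "degree A \<le> m" and A0: "coeff A 0 = 0" and dA': "degree A' \<le> m" and A0': "coeff A' 0 = 0"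
    and j: "j < card (fib A c)" and j': "j' < card (fib A' c')"
  shows "(\<Sum>p\<in>Lv m. cnj (pk m A c j p) * pk m A' c' j' p)
       = (if A = A' \<and> c = c' \<and> j = j' then of_nat (card (UNIV::'a set) ^ m * card (fib A c)) else 0)"
proof -
  define W where "W x = cnj (gk A c j x) * gk A' c' j' x" for x
  have "(\<Sum>p\<in>Lv m. cnj (pk m A c j p) * pk m A' c' j' p) = (\<Sum>p\<in>Lv m. (\<lambda>r. W (r!0) * (cnj (dir m A r) * dir m A' r)) (pc m p))"
    by (rule sum.cong) (auto simp: pk_def W_def algebra_simps)
  also have "\<dots> = (\<Sum>r\<in>Lv m. W (r!0) * (cnj (dir m A r) * dir m A' r))"
    using sum.reindex_bij_betw[OF pc_bij, of "\<lambda>r. W (r!0) * (cnj (dir m A r) * dir m A' r)" m] by simp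
  also have "\<dots> = (if A = A' \<and> c = c' \<and> j = j' then of_nat (card (UNIV::'a set) ^ m * card (fib A c)) else 0)"
  proof (cases "A = A'")
    case True
    have "(\<Sum>r\<in>Lv m. W (r!0) * (cnj (dir m A r) * dir m A' r)) = of_nat (card (UNIV::'a set) ^ m) * (\<Sum>x\<in>UNIV. W x)"
      using True dir_same[of W m A] by simp
    also have "(\<Sum>x\<in>UNIV. W x) = (if c = c' \<and> j = j' then of_nat (card (fib A c)) else 0)"
      unfolding W_def using gk_orth[of j A c j' c'] j j' True by simp
    finally show ?thesis using True by simp
  next
    case False
    then show ?thesis using dir_orth[OF dA dA' False] A0 A0' by simp
  qed
  finally show ?thesis .
qed

datatype ('p, 'a) eidx = LP bool 'p | LZ 'p | PK 'p 'a nat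

definition sg :: "bool \<Rightarrow> real" where "sg b = (if b then 1 else -1)"

definition sig :: "'a::{field,finite} poly \<Rightarrow> real" where
  "sig P = sqrt (real (card (UNIV::'a set) * rts P))"

fun ev :: "('a::{field,finite} poly, 'a) eidx \<Rightarrow> real" where
  "ev (LP b P) = sg b * sig P"
| "ev (LZ P) = 0"
| "ev (PK A c j) = 0"

fun ef :: "nat \<Rightarrow> ('a::{field,finite} poly, 'a) eidx \<Rightarrow> 'a list + 'a list \<Rightarrow> complex" where
  "ef m (LP b P) (Inl p) = Nf m P p / complex_of_real (sg b * sig P)"
| "ef m (LP b P) (Inr l) = dir m P l"
| "ef m (LZ P) (Inl p) = 0"
| "ef m (LZ P) (Inr l) = dir m P l"
| "ef m (PK A c j) (Inl p) = pk m A c j p"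
| "ef m (PK A c j) (Inr l) = 0"

definition Rw :: "nat \<Rightarrow> ('a::field list + 'a list) \<Rightarrow> ('a list + 'a list) \<Rightarrow> real" where
  "Rw m v w = (if wenger_adj m v w then 1 else 0)"

lemma wv_eq: "wenger_vertices m = Inl ` Lv m \<union> Inr ` Lv m"
  by (simp add: wenger_vertices_def Lv_def)

lemma sum_wv:
  fixes F :: "'a::finite list + 'a list \<Rightarrow> 'b::comm_monoid_add"
  shows "(\<Sum>v\<in>Inl ` Lv m \<union> Inr ` Lv m. F v) = (\<Sum>p\<in>Lv m. F (Inl p)) + (\<Sum>l\<in>Lv m. F (Inr l))"
proof -
  have "(\<Sum>v\<in>Inl ` Lv m \<union> Inr ` Lv m. F v) = (\<Sum>v\<in>Inl ` Lv m. F v) + (\<Sum>v\<in>Inr ` Lv m. F v)"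
    by (rule sum.union_disjoint) auto
  also have "(\<Sum>v\<in>Inl ` Lv m. F v) = (\<Sum>p\<in>Lv m. F (Inl p))" by (simp add: sum.reindex)
  also have "(\<Sum>v\<in>Inr ` Lv m. F v) = (\<Sum>l\<in>Lv m. F (Inr l))" by (simp add: sum.reindex)
  finally show ?thesis .
qed

lemma ofr_if: "complex_of_real (if c then 1 else 0) * x = (if c then x else 0)" by simp

lemma adj_sum_Inl:
  fixes f :: "'a::{field,finite} list + 'a list \<Rightarrow> complex"
  assumes p: "p \<in> Lv m"
  shows "(\<Sum>w\<in>Inl ` Lv m \<union> Inr ` Lv m. complex_of_real (Rw m (Inl p) w) * f w) = (\<Sum>t\<in>UNIV. f (Inr (line m p t)))"
proof -
  have "(\<Sum>w\<in>Inl ` Lv m \<union> Inr ` Lv m. complex_of_real (Rw m (Inl p) w) * f w)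
      = (\<Sum>l\<in>Lv m. if wenger_incident m p l then f (Inr l) else 0)"
    unfolding sum_wv by (simp add: Rw_def wenger_adj_def ofr_if)
  also have "\<dots> = (\<Sum>l\<in>{l\<in>Lv m. wenger_incident m p l}. f (Inr l))"
    by (simp add: sum.inter_filter)
  also have "\<dots> = (\<Sum>t\<in>UNIV. f (Inr (line m p t)))" by (rule sum_nbr_lines[OF p])
  finally show ?thesis .
qed

lemma adj_sum_Inr:
  fixes f :: "'a::{field,finite} list + 'a list \<Rightarrow> complex"
  assumes l: "l \<in> Lv m"
  shows "(\<Sum>w\<in>Inl ` Lv m \<union> Inr ` Lv m. complex_of_real (Rw m (Inr l) w) * f w) = (\<Sum>s\<in>UNIV. f (Inl (pt m l s)))"
proof -
  have "(\<Sum>w\<in>Inl ` Lv m \<union> Inr ` Lv m. complex_of_real (Rw m (Inr l) w) * f w)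
      = (\<Sum>p\<in>Lv m. if wenger_incident m p l then f (Inl p) else 0)"
    unfolding sum_wv by (simp add: Rw_def wenger_adj_def ofr_if)
  also have "\<dots> = (\<Sum>p\<in>{p\<in>Lv m. wenger_incident m p l}. f (Inl p))"
    by (simp add: sum.inter_filter)
  also have "\<dots> = (\<Sum>s\<in>UNIV. f (Inl (pt m l s)))" by (rule sum_nbr_points[OF l])
  finally show ?thesis .
qed

definition Pm :: "nat \<Rightarrow> 'a::zero poly set" where "Pm m = {P. degree P \<le> m}"
definition Am :: "nat \<Rightarrow> 'a::zero poly set" where "Am m = {A. degree A \<le> m \<and> coeff A 0 = 0}"

definition JJ :: "nat \<Rightarrow> ('a::{field,finite} poly, 'a) eidx set" where
  "JJ m = {LP b P | b P. P \<in> Pm m \<and> 0 < rts P} \<union> {LZ P | P. P \<in> Pm m \<and> rts P = 0}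
     \<union> {PK A c j | A c j. A \<in> Am m \<and> c \<in> range (poly A) \<and> 0 < j \<and> j < card (fib A c)}"

lemma sig_sq: "(sig P)^2 = real (card (UNIV::'a set) * rts (P::'a::{field,finite} poly))"
  by (simp add: sig_def)

lemma sig_pos: "0 < rts P \<Longrightarrow> 0 < sig (P::'a::{field,finite} poly)"
  using finite_UNIV_card_ge_0[where 'a='a] by (simp add: sig_def)

lemma sg_sq[simp]: "sg b * sg b = 1" by (simp add: sg_def)
lemma sg_nz[simp]: "sg b \<noteq> 0" by (simp add: sg_def)

lemma eig_LP:
  fixes P :: "'a::{field,finite} poly"
  assumes P: "P \<in> Pm m" "0 < rts P" and v: "v \<in> Inl ` Lv m \<union> Inr ` Lv m"
  shows "(\<Sum>w\<in>Inl ` Lv m \<union> Inr ` Lv m. complex_of_real (Rw m v w) * ef m (LP b P) w)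
     = complex_of_real (ev (LP b P)) * ef m (LP b P) v"
proof -
  have dP: "degree P \<le> m" using P by (simp add: Pm_def)
  define s where "s = sg b * sig P"
  have s0: "s \<noteq> 0" using sig_pos[OF P(2)] by (simp add: s_def)
  have ss: "s * s = real (card (UNIV::'a set) * rts P)"
    using sig_sq[of P] by (simp add: s_def power2_eq_square algebra_simps)
  from v show ?thesis
  proof
    assume "v \<in> Inl ` Lv m"
    then obtain p where p: "p \<in> Lv m" "v = Inl p" by auto
    show ?thesis using s0 unfolding p(2) adj_sum_Inl[OF p(1)]
      by (simp add: Nf_def s_def[symmetric])
  next
    assume "v \<in> Inr ` Lv m"
    then obtain l where l: "l \<in> Lv m" "v = Inr l" by auto
    have "(\<Sum>x\<in>UNIV. Nf m P (pt m l x) / complex_of_real s) = (\<Sum>x\<in>UNIV. Nf m P (pt m l x)) / complex_of_real s"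
      by (simp add: sum_divide_distrib)
    also have "\<dots> = complex_of_real (s * s) * dir m P l / complex_of_real s"
      using NN_eig[OF l(1) dP] ss by simp
    also have "\<dots> = complex_of_real s * dir m P l" using s0 by (simp add: field_simps)
    finally show ?thesis unfolding l(2) adj_sum_Inr[OF l(1)] by (simp add: s_def[symmetric])
  qed
qed

lemma eig_LZ:
  fixes P :: "'a::{field,finite} poly"
  assumes P: "P \<in> Pm m" "rts P = 0" and v: "v \<in> Inl ` Lv m \<union> Inr ` Lv m"
  shows "(\<Sum>w\<in>Inl ` Lv m \<union> Inr ` Lv m. complex_of_real (Rw m v w) * ef m (LZ P) w)
     = complex_of_real (ev (LZ P)) * ef m (LZ P) v"
proof -
  have dP: "degree P \<le> m" using P by (simp add: Pm_def)
  have nr: "poly P x \<noteq> 0" for x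
  proof
    assume "poly P x = 0"
    then have "x \<in> {s. poly P s = 0}" by simp
    then have "card {s. poly P s = 0} > 0" by (auto simp: card_gt_0_iff)
    then show False using P(2) by (simp add: rts_def)
  qed
  from v show ?thesis
  proof
    assume "v \<in> Inl ` Lv m"
    then obtain p where p: "p \<in> Lv m" "v = Inl p" by auto
    show ?thesis unfolding p(2) adj_sum_Inl[OF p(1)]
      using N_kernel[OF p(1) dP nr] by (simp add: Nf_def)
  next
    assume "v \<in> Inr ` Lv m"
    then obtain l where l: "l \<in> Lv m" "v = Inr l" by auto
    show ?thesis unfolding l(2) adj_sum_Inr[OF l(1)] by simp
  qed
qed

lemma eig_PK:
  fixes A :: "'a::{field,finite} poly"
  assumes A: "A \<in> Am m" and j: "0 < j" "j < card (fib A c)" and v: "v \<in> Inl ` Lv m \<union> Inr ` Lv m"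
  shows "(\<Sum>w\<in>Inl ` Lv m \<union> Inr ` Lv m. complex_of_real (Rw m v w) * ef m (PK A c j) w)
     = complex_of_real (ev (PK A c j)) * ef m (PK A c j) v"
proof -
  have dA: "degree A \<le> m" "coeff A 0 = 0" using A by (auto simp: Am_def)
  from v show ?thesis
  proof
    assume "v \<in> Inl ` Lv m"
    then obtain p where p: "p \<in> Lv m" "v = Inl p" by auto
    show ?thesis unfolding p(2) adj_sum_Inl[OF p(1)] by simp
  next
    assume "v \<in> Inr ` Lv m"
    then obtain l where l: "l \<in> Lv m" "v = Inr l" by auto
    show ?thesis unfolding l(2) adj_sum_Inr[OF l(1)] using PK_eig[OF l(1) dA j] by simp
  qed
qed

lemma eig_all:
  assumes "j \<in> JJ m" "v \<in> Inl ` Lv m \<union> Inr ` Lv m"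
  shows "(\<Sum>w\<in>Inl ` Lv m \<union> Inr ` Lv m. complex_of_real (Rw m v w) * ef m j w)
     = complex_of_real (ev j) * ef m (j::('a::{field,finite} poly, 'a) eidx) v"
proof -
  from assms(1) consider (a) b P where "j = LP b P" "P \<in> Pm m" "0 < rts P"
    | (b) P where "j = LZ P" "P \<in> Pm m" "rts P = 0"
    | (c) A c k where "j = PK A c k" "A \<in> Am m" "0 < k" "k < card (fib A c)"
    unfolding JJ_def by auto
  then show ?thesis
  proof cases
    case a then show ?thesis using eig_LP[OF a(2,3) assms(2)] by simp
  next
    case b then show ?thesis using eig_LZ[OF b(2,3) assms(2)] by simp
  next
    case c then show ?thesis using eig_PK[OF c(2,3,4) assms(2)] by simp
  qed
qed

fun cc :: "nat \<Rightarrow> ('a::{field,finite} poly, 'a) eidx \<Rightarrow> complex" where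
  "cc m (LP b P) = 2 * of_nat (card (UNIV::'a set) ^ Suc m)"
| "cc m (LZ P) = of_nat (card (UNIV::'a set) ^ Suc m)"
| "cc m (PK A c j) = of_nat (card (UNIV::'a set) ^ m * card (fib A c))"

lemma DL:
  fixes P P' :: "'a::{field,finite} poly"
  assumes "P \<in> Pm m" "P' \<in> Pm m"
  shows "(\<Sum>l\<in>Lv m. cnj (dir m P l) * dir m P' l) = (if P = P' then of_nat (card (UNIV::'a set) ^ Suc m) else 0)"
proof (cases "P = P'")
  case True
  then show ?thesis using dir_same[of "\<lambda>_. 1" m P] by (simp add: mult.commute)
next
  case False
  then show ?thesis using dir_orth[of P m P' "\<lambda>_. 1"] assms by (simp add: Pm_def)
qed

lemma NNi:
  fixes P P' :: "'a::{field,finite} poly"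
  assumes "P \<in> Pm m" "P' \<in> Pm m"
  shows "(\<Sum>p\<in>Lv m. cnj (Nf m P p) * Nf m P' p)
     = of_nat (card (UNIV::'a set) * rts P') * (if P = P' then of_nat (card (UNIV::'a set) ^ Suc m) else 0)"
proof -
  have "(\<Sum>p\<in>Lv m. cnj (Nf m P p) * Nf m P' p) = (\<Sum>l\<in>Lv m. cnj (dir m P l) * (\<Sum>s\<in>UNIV. Nf m P' (pt m l s)))"
    by (rule N_adjoint)
  also have "\<dots> = (\<Sum>l\<in>Lv m. of_nat (card (UNIV::'a set) * rts P') * (cnj (dir m P l) * dir m P' l))"
  proof (rule sum.cong)
    fix l :: "'a list" assume l: "l \<in> Lv m"
    have dP': "degree P' \<le> m" using assms by (simp add: Pm_def)
    show "cnj (dir m P l) * (\<Sum>s\<in>UNIV. Nf m P' (pt m l s)) = of_nat (card (UNIV::'a set) * rts P') * (cnj (dir m P l) * dir m P' l)"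
      using NN_eig[OF l dP'] by (simp add: algebra_simps)
  qed simp
  also have "\<dots> = of_nat (card (UNIV::'a set) * rts P') * (\<Sum>l\<in>Lv m. cnj (dir m P l) * dir m P' l)"
    by (simp add: sum_distrib_left)
  finally show ?thesis using DL[OF assms] by simp
qed

lemma NPK:
  fixes P A :: "'a::{field,finite} poly"
  assumes "A \<in> Am m" "0 < k" "k < card (fib A c)"
  shows "(\<Sum>p\<in>Lv m. cnj (Nf m P p) * pk m A c k p) = 0"
proof -
  have "(\<Sum>p\<in>Lv m. cnj (Nf m P p) * pk m A c k p) = (\<Sum>l\<in>Lv m. cnj (dir m P l) * (\<Sum>s\<in>UNIV. pk m A c k (pt m l s)))"
    by (rule N_adjoint)
  also have "\<dots> = 0"
  proof (rule sum.neutral, rule ballI)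
    fix l :: "'a list" assume l: "l \<in> Lv m"
    have dA: "degree A \<le> m" "coeff A 0 = 0" using assms by (auto simp: Am_def)
    show "cnj (dir m P l) * (\<Sum>s\<in>UNIV. pk m A c k (pt m l s)) = 0"
      using PK_eig[OF l dA assms(2,3)] by simp
  qed
  finally show ?thesis .
qed

lemma cnj_sum_swap:
  fixes f g :: "'b \<Rightarrow> complex"
  shows "(\<Sum>x\<in>X. cnj (f x) * g x) = cnj (\<Sum>x\<in>X. cnj (g x) * f x)"
  by (simp add: mult.commute)

lemma cnj_div_real: "cnj (x / complex_of_real r) = cnj x / complex_of_real r"
  by simp

lemma inner_split:
  fixes j j' :: "('a::{field,finite} poly, 'a) eidx"
  shows "(\<Sum>v\<in>Inl ` Lv m \<union> Inr ` Lv m. cnj (ef m j v) * ef m j' v)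
    = (\<Sum>p\<in>Lv m. cnj (ef m j (Inl p)) * ef m j' (Inl p)) + (\<Sum>l\<in>Lv m. cnj (ef m j (Inr l)) * ef m j' (Inr l))"
  by (rule sum_wv)

lemma orth_LP_LP:
  fixes P P' :: "'a::{field,finite} poly"
  assumes P: "P \<in> Pm m" "0 < rts P" and P': "P' \<in> Pm m" "0 < rts P'"
  shows "(\<Sum>v\<in>Inl ` Lv m \<union> Inr ` Lv m. cnj (ef m (LP b P) v) * ef m (LP b' P') v)
     = (if LP b P = LP b' P' then cc m (LP b P) else 0)"
proof -
  let ?Q = "of_nat (card (UNIV::'a set) ^ Suc m) :: complex"
  define s where "s = sg b * sig P"
  define s' where "s' = sg b' * sig P'"
  have s0: "s \<noteq> 0" "s' \<noteq> 0" using sig_pos[OF P(2)] sig_pos[OF P'(2)] by (auto simp: s_def s'_def)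
  have pt: "(\<Sum>p\<in>Lv m. cnj (ef m (LP b P) (Inl p)) * ef m (LP b' P') (Inl p))
       = (\<Sum>p\<in>Lv m. cnj (Nf m P p) * Nf m P' p) / complex_of_real (s * s')"
    by (simp add: s_def s'_def sum_divide_distrib)
  have ln: "(\<Sum>l\<in>Lv m. cnj (ef m (LP b P) (Inr l)) * ef m (LP b' P') (Inr l)) = (if P = P' then ?Q else 0)"
    using DL[OF P(1) P'(1)] by simp
  show ?thesis
  proof (cases "P = P'")
    case False
    then show ?thesis unfolding inner_split pt ln NNi[OF P(1) P'(1)] by simp
  next
    case True
    have ss: "s * s' = sg b * sg b' * real (card (UNIV::'a set) * rts P)"
      using sig_sq[of P] True by (simp add: s_def s'_def power2_eq_square algebra_simps)
    have r0: "real (card (UNIV::'a set) * rts P) \<noteq> 0"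
      using P(2) finite_UNIV_card_ge_0[where 'a='a] by simp
    have "(\<Sum>p\<in>Lv m. cnj (Nf m P p) * Nf m P' p) / complex_of_real (s * s')
        = complex_of_real (real (card (UNIV::'a set) * rts P)) * ?Q / complex_of_real (sg b * sg b' * real (card (UNIV::'a set) * rts P))"
      unfolding NNi[OF P(1) P'(1)] ss using True by simp
    also have "\<dots> = ?Q / complex_of_real (sg b * sg b')"
      using r0 by (simp add: field_simps)
    finally have e: "(\<Sum>p\<in>Lv m. cnj (Nf m P p) * Nf m P' p) / complex_of_real (s * s') = ?Q / complex_of_real (sg b * sg b')" .
    show ?thesis
    proof (cases "b = b'")
      case True
      then show ?thesis unfolding inner_split pt ln e using \<open>P = P'\<close> by simp
    next
      case False
      then have "sg b * sg b' = -1" by (cases b; cases b') (auto simp: sg_def)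
      then show ?thesis unfolding inner_split pt ln e using \<open>P = P'\<close> False by simp
    qed
  qed
qed

lemma orth_all:
  fixes j j' :: "('a::{field,finite} poly, 'a) eidx"
  assumes j: "j \<in> JJ m" and j': "j' \<in> JJ m"
  shows "(\<Sum>v\<in>Inl ` Lv m \<union> Inr ` Lv m. cnj (ef m j v) * ef m j' v) = (if j = j' then cc m j else 0)"
proof -
  have cases: "\<And>j. j \<in> JJ m \<Longrightarrow> (\<exists>b P. j = LP b P \<and> P \<in> Pm m \<and> 0 < rts P) \<or> (\<exists>P. j = LZ P \<and> P \<in> Pm m \<and> rts P = 0)
     \<or> (\<exists>A c k. j = PK A c k \<and> A \<in> Am m \<and> 0 < k \<and> k < card (fib A c))"
    unfolding JJ_def by auto
  show ?thesis
  proof (cases j)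
    case (LP b P)
    then have P: "P \<in> Pm m" "0 < rts P" using cases[OF j] by auto
    show ?thesis
    proof (cases j')
      case (LP b' P')
      then have P': "P' \<in> Pm m" "0 < rts P'" using cases[OF j'] by auto
      show ?thesis using orth_LP_LP[OF P P'] \<open>j = LP b P\<close> LP by simp
    next
      case (LZ P')
      then have P': "P' \<in> Pm m" "rts P' = 0" using cases[OF j'] by auto
      have "P \<noteq> P'" using P P' by auto
      then show ?thesis unfolding inner_split using \<open>j = LP b P\<close> LZ DL[OF P(1) P'(1)] by simp
    next
      case (PK A c k)
      then have A: "A \<in> Am m" "0 < k" "k < card (fib A c)" using cases[OF j'] by auto
      show ?thesis unfolding inner_split using \<open>j = LP b P\<close> PK NPK[OF A, of P]
        by (simp add: sum_divide_distrib[symmetric])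
    qed
  next
    case (LZ P)
    then have P: "P \<in> Pm m" "rts P = 0" using cases[OF j] by auto
    show ?thesis
    proof (cases j')
      case (LP b' P')
      then have P': "P' \<in> Pm m" "0 < rts P'" using cases[OF j'] by auto
      have "P \<noteq> P'" using P P' by auto
      then show ?thesis unfolding inner_split using \<open>j = LZ P\<close> LP DL[OF P(1) P'(1)] by simp
    next
      case (LZ P')
      then have P': "P' \<in> Pm m" "rts P' = 0" using cases[OF j'] by auto
      show ?thesis unfolding inner_split using \<open>j = LZ P\<close> LZ DL[OF P(1) P'(1)] by simp
    next
      case (PK A c k)
      then show ?thesis unfolding inner_split using \<open>j = LZ P\<close> by simp
    qed
  next
    case (PK A c k)
    then have A: "A \<in> Am m" "0 < k" "k < card (fib A c)" using cases[OF j] by auto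
    show ?thesis
    proof (cases j')
      case (LP b' P')
      have "(\<Sum>p\<in>Lv m. cnj (pk m A c k p) * (Nf m P' p / complex_of_real (sg b' * sig P')))
          = (\<Sum>p\<in>Lv m. cnj (pk m A c k p) * Nf m P' p) / complex_of_real (sg b' * sig P')"
        by (simp add: sum_divide_distrib)
      also have "(\<Sum>p\<in>Lv m. cnj (pk m A c k p) * Nf m P' p) = cnj (\<Sum>p\<in>Lv m. cnj (Nf m P' p) * pk m A c k p)"
        by (rule cnj_sum_swap)
      also have "\<dots> = 0" using NPK[OF A, of P'] by simp
      finally show ?thesis unfolding inner_split using \<open>j = PK A c k\<close> LP by simp
    next
      case (LZ P')
      then show ?thesis unfolding inner_split using \<open>j = PK A c k\<close> by simp
    next
      case (PK A' c' k')
      then have A': "A' \<in> Am m" "0 < k'" "k' < card (fib A' c')" using cases[OF j'] by auto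
      show ?thesis unfolding inner_split
        using \<open>j = PK A c k\<close> PK PK_orth[of A m A' k c k' c'] A A' by (auto simp: Am_def)
    qed
  qed
qed

lemma cc_nz:
  fixes j :: "('a::{field,finite} poly, 'a) eidx"
  assumes "j \<in> JJ m"
  shows "cc m j \<noteq> 0"
  using assms finite_UNIV_card_ge_0[where 'a='a] unfolding JJ_def by auto

lemma Pm_bij_Lv:
  "bij_betw (\<lambda>P. map (coeff P) [0..<Suc d]) (Pm d :: 'a::{field,finite} poly set) (Lv d)"
proof -
  let ?cl = "\<lambda>P::'a poly. map (coeff P) [0..<Suc d]"
  have inj: "inj_on ?cl (Pm d)"
  proof (rule inj_onI)
    fix P P' :: "'a poly" assume a: "P \<in> Pm d" "P' \<in> Pm d" "?cl P = ?cl P'"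
    show "P = P'"
    proof (rule poly_eqI)
      fix i
      show "coeff P i = coeff P' i"
      proof (cases "i \<le> d")
        case True
        have "?cl P ! i = ?cl P' ! i" by (simp only: a(3))
        then show ?thesis using True by (simp add: nth_map_upt del: upt_Suc)
      next
        case False
        then show ?thesis using a(1,2) by (simp add: Pm_def coeff_eq_0)
      qed
    qed
  qed
  have img: "?cl ` Pm d = Lv d"
  proof (intro equalityI subsetI)
    fix l assume "l \<in> ?cl ` Pm d" then show "l \<in> Lv d" by (auto simp: Lv_def)
  next
    fix l :: "'a list" assume l: "l \<in> Lv d"
    have dg: "degree (Poly l) \<le> d"
    proof (rule degree_le, intro allI impI)
      fix i assume "d < i"
      then show "coeff (Poly l) i = 0" using l by (simp add: Lv_def coeff_Poly nth_default_def)
    qed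
    have "?cl (Poly l) = l"
      using l by (intro nth_equalityI) (auto simp: Lv_def coeff_Poly nth_default_def simp del: upt_Suc)
    then show "l \<in> ?cl ` Pm d" using dg by (metis Pm_def image_eqI mem_Collect_eq)
  qed
  show ?thesis using inj img by (simp add: bij_betw_def)
qed

lemma finite_Pm[simp]: "finite (Pm d :: 'a::{field,finite} poly set)"
  using Pm_bij_Lv[of d, where 'a='a] bij_betw_finite finite_Lv by blast

lemma card_Pm: "card (Pm d :: 'a::{field,finite} poly set) = card (UNIV::'a set) ^ Suc d"
  using bij_betw_same_card[OF Pm_bij_Lv[of d, where 'a='a]] card_Lv by metis

lemma vanish_dvd:
  fixes P :: "'a::field poly"
  assumes "finite T"
  shows "(\<forall>s\<in>T. poly P s = 0) \<longleftrightarrow> (\<Prod>t\<in>T. [:-t, 1:]) dvd P"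
  using assms
proof (induction T arbitrary: P rule: finite_induct)
  case empty
  then show ?case by simp
next
  case (insert t T)
  show ?case
  proof
    assume H: "\<forall>s\<in>insert t T. poly P s = 0"
    then have "[:-t, 1:] dvd P" by (simp add: poly_eq_0_iff_dvd)
    then obtain P1 where P1: "P = [:-t, 1:] * P1" by (elim dvdE)
    have "\<forall>s\<in>T. poly P1 s = 0"
    proof
      fix s assume s: "s \<in> T"
      then have "s \<noteq> t" using insert by auto
      moreover have "poly P s = 0" using H s by auto
      ultimately show "poly P1 s = 0" using P1 by simp
    qed
    then have "(\<Prod>t\<in>T. [:-t, 1:]) dvd P1" using insert.IH by blast
    then have "[:-t, 1:] * (\<Prod>t\<in>T. [:-t, 1:]) dvd [:-t, 1:] * P1" by (rule mult_dvd_mono[OF dvd_refl])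
    then show "(\<Prod>t\<in>insert t T. [:-t, 1:]) dvd P" by (simp only: P1 prod.insert[OF insert(1,2)])
  next
    assume "(\<Prod>t\<in>insert t T. [:-t, 1:]) dvd P"
    then have d: "[:-t, 1:] * (\<Prod>t\<in>T. [:-t, 1:]) dvd P" by (simp only: prod.insert[OF insert(1,2)])
    then have "[:-t, 1:] dvd P" using dvd_mult_left by blast
    moreover have "(\<Prod>t\<in>T. [:-t, 1:]) dvd P" using d dvd_mult_right by blast
    ultimately show "\<forall>s\<in>insert t T. poly P s = 0" using insert.IH by (simp add: poly_eq_0_iff_dvd)
  qed
qed

lemma prodT_props:
  fixes T :: "'a::field set"
  assumes "finite T"
  shows "(\<Prod>t\<in>T. [:-t, 1:]) \<noteq> 0" "degree (\<Prod>t\<in>T. [:-t, 1:]) = card T"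
proof -
  show "(\<Prod>t\<in>T. [:-t, 1:]) \<noteq> 0" using assms by (simp add: prod_zero_iff)
  have "degree (\<Prod>t\<in>T. [:-t, 1:]) = (\<Sum>t\<in>T. degree [:-t, 1:])"
    by (rule degree_prod_eq_sum_degree) simp
  then show "degree (\<Prod>t\<in>T. [:-t, 1:]) = card T" by simp
qed

lemma Z_card:
  fixes T :: "'a::{field,finite} set"
  shows "card {P \<in> Pm m. \<forall>s\<in>T. poly P s = 0} = card (UNIV::'a set) ^ (Suc m - card T)"
proof -
  have fT: "finite T" by simp
  define Q where "Q = (\<Prod>t\<in>T. [:-t, 1:])"
  have Q0: "Q \<noteq> 0" and dQ: "degree Q = card T" using prodT_props[OF fT] by (auto simp: Q_def)
  have eq: "{P \<in> Pm m. \<forall>s\<in>T. poly P s = 0} = {P \<in> Pm m. Q dvd P}"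
    using vanish_dvd[OF fT] by (auto simp: Q_def)
  show ?thesis
  proof (cases "card T \<le> m")
    case True
    have img: "{P \<in> Pm m. Q dvd P} = (\<lambda>C. Q * C) ` Pm (m - card T)"
    proof (intro equalityI subsetI)
      fix P assume "P \<in> {P \<in> Pm m. Q dvd P}"
      then have P: "degree P \<le> m" "Q dvd P" by (auto simp: Pm_def)
      then obtain C where C: "P = Q * C" by (elim dvdE)
      have "degree C \<le> m - card T"
      proof (cases "C = 0")
        case False
        then have "degree P = card T + degree C" using C Q0 dQ by (simp add: degree_mult_eq)
        then show ?thesis using P by simp
      qed simp
      then show "P \<in> (\<lambda>C. Q * C) ` Pm (m - card T)" using C by (auto simp: Pm_def)
    next
      fix P assume "P \<in> (\<lambda>C. Q * C) ` Pm (m - card T)"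
      then obtain C where C: "P = Q * C" "degree C \<le> m - card T" by (auto simp: Pm_def)
      have "degree P \<le> card T + degree C" using C(1) dQ degree_mult_le[of Q C] by simp
      then show "P \<in> {P \<in> Pm m. Q dvd P}" using C True by (auto simp: Pm_def)
    qed
    have inj: "inj_on (\<lambda>C. Q * C) (Pm (m - card T))" using Q0 by (auto simp: inj_on_def)
    have "card {P \<in> Pm m. \<forall>s\<in>T. poly P s = 0} = card (Pm (m - card T) :: 'a poly set)"
      unfolding eq img by (rule card_image[OF inj])
    also have "\<dots> = card (UNIV::'a set) ^ Suc (m - card T)" by (rule card_Pm)
    also have "Suc (m - card T) = Suc m - card T" using True by simp
    finally show ?thesis .
  next
    case False
    have "{P \<in> Pm m. \<forall>s\<in>T. poly P s = 0} = {0}"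
    proof (intro equalityI subsetI)
      fix P assume P: "P \<in> {P \<in> Pm m. \<forall>s\<in>T. poly P s = 0}"
      show "P \<in> {0}"
      proof (rule ccontr)
        assume "P \<notin> {0}"
        then have P0: "P \<noteq> 0" by simp
        have "T \<subseteq> {x. poly P x = 0}" using P by auto
        then have "card T \<le> card {x. poly P x = 0}" by (intro card_mono) auto
        also have "\<dots> \<le> degree P" by (rule card_poly_roots_bound[OF P0])
        also have "\<dots> \<le> m" using P by (simp add: Pm_def)
        finally show False using False by simp
      qed
    qed (auto simp: Pm_def)
    then show ?thesis using False by simp
  qed
qed

lemma sum_pow_card:
  fixes g :: "nat \<Rightarrow> 'b::comm_semiring_1"
  assumes "finite X"
  shows "(\<Sum>U\<in>Pow X. g (card U)) = (\<Sum>k\<le>card X. of_nat (card X choose k) * g k)"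
proof -
  have P: "Pow X = (\<Union>k\<in>{..card X}. {U. U \<subseteq> X \<and> card U = k})"
    using assms by (auto intro: card_mono)
  have "(\<Sum>U\<in>Pow X. g (card U)) = (\<Sum>k\<le>card X. \<Sum>U\<in>{U. U \<subseteq> X \<and> card U = k}. g (card U))"
    unfolding P by (rule sum.UNION_disjoint) (use assms in auto)
  also have "\<dots> = (\<Sum>k\<le>card X. of_nat (card X choose k) * g k)"
    by (rule sum.cong) (simp_all add: n_subsets[OF assms])
  finally show ?thesis .
qed

lemma alt_pow:
  assumes "finite X"
  shows "(\<Sum>U\<in>Pow X. (-1::int) ^ card U) = (if X = {} then 1 else 0)"
proof (cases "X = {}")
  case False
  then have "card X > 0" using assms by auto
  then show ?thesis using sum_pow_card[OF assms, of "\<lambda>k. (-1::int)^k"] choose_alternating_sum[of "card X", where 'a=int] False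
    by (simp add: mult.commute)
qed simp

lemma sup_reindex:
  fixes S R :: "'x set"
  assumes "S \<subseteq> R" "finite R"
  shows "(\<Sum>T\<in>{T. S \<subseteq> T \<and> T \<subseteq> R}. g (card T - card S)) = (\<Sum>U\<in>Pow (R - S). g (card U))"
proof -
  have inj: "inj_on (\<lambda>U. S \<union> U) (Pow (R - S))" by (auto simp: inj_on_def)
  have img: "(\<lambda>U. S \<union> U) ` Pow (R - S) = {T. S \<subseteq> T \<and> T \<subseteq> R}"
  proof (intro equalityI subsetI)
    fix T assume "T \<in> {T. S \<subseteq> T \<and> T \<subseteq> R}"
    then have "T = S \<union> (T - S)" "T - S \<in> Pow (R - S)" by auto
    then show "T \<in> (\<lambda>U. S \<union> U) ` Pow (R - S)" by blast
  qed (use assms in auto)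
  have "(\<Sum>T\<in>{T. S \<subseteq> T \<and> T \<subseteq> R}. g (card T - card S)) = (\<Sum>U\<in>Pow (R - S). g (card (S \<union> U) - card S))"
    unfolding img[symmetric] by (rule sum.reindex[OF inj, unfolded comp_def])
  also have "\<dots> = (\<Sum>U\<in>Pow (R - S). g (card U))"
  proof (rule sum.cong)
    fix U assume "U \<in> Pow (R - S)"
    then have "card (S \<union> U) = card S + card U"
      using assms finite_subset by (intro card_Un_disjoint) (auto intro: finite_subset)
    then show "g (card (S \<union> U) - card S) = g (card U)" by simp
  qed simp
  finally show ?thesis .
qed

definition rset :: "'a::{field,finite} poly \<Rightarrow> 'a set" where
  "rset P = {s. poly P s = 0}"

lemma card_filter_sum:
  assumes "finite A"
  shows "int (card {x \<in> A. Q x}) = (\<Sum>x\<in>A. if Q x then 1 else 0)"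
  using assms by (simp add: sum.If_cases Int_def)

lemma E_card:
  fixes S :: "'a::{field,finite} set"
  shows "int (card {P \<in> Pm m. rset P = S})
       = (\<Sum>T\<in>{T. S \<subseteq> T}. (-1)^(card T - card S) * int (card (UNIV::'a set) ^ (Suc m - card T)))"
proof -
  have fT: "finite {T::'a set. S \<subseteq> T}" by simp
  have "(\<Sum>T\<in>{T. S \<subseteq> T}. (-1)^(card T - card S) * int (card (UNIV::'a set) ^ (Suc m - card T)))
      = (\<Sum>T\<in>{T. S \<subseteq> T}. (-1)^(card T - card S) * (\<Sum>P\<in>Pm m. if T \<subseteq> rset P then 1 else 0))"
  proof (rule sum.cong)
    fix T :: "'a set" assume "T \<in> {T. S \<subseteq> T}"
    have "int (card (UNIV::'a set) ^ (Suc m - card T)) = int (card {P \<in> Pm m. \<forall>s\<in>T. poly P s = 0})"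
      by (simp add: Z_card)
    also have "\<dots> = (\<Sum>P\<in>Pm m. if T \<subseteq> rset P then 1 else 0)"
      by (subst card_filter_sum) (simp_all add: rset_def subset_iff Ball_def)
    finally show "(-1)^(card T - card S) * int (card (UNIV::'a set) ^ (Suc m - card T))
        = (-1)^(card T - card S) * (\<Sum>P\<in>Pm m. if T \<subseteq> rset P then 1 else 0)" by simp
  qed simp
  also have "\<dots> = (\<Sum>P\<in>Pm m. \<Sum>T\<in>{T. S \<subseteq> T}. if T \<subseteq> rset P then (-1)^(card T - card S) else 0)"
    by (simp add: sum_distrib_left if_distrib[of "(*) _"] sum.swap[of _ "{T. S \<subseteq> T}"] cong: if_cong)
  also have "\<dots> = (\<Sum>P\<in>Pm m. if rset P = S then 1 else 0)"
  proof (rule sum.cong)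
    fix P :: "'a poly" assume "P \<in> Pm m"
    have "(\<Sum>T\<in>{T. S \<subseteq> T}. if T \<subseteq> rset P then (-1::int)^(card T - card S) else 0)
        = (\<Sum>T\<in>{T. S \<subseteq> T \<and> T \<subseteq> rset P}. (-1)^(card T - card S))"
    proof -
      have "{T \<in> {T. S \<subseteq> T}. T \<subseteq> rset P} = {T. S \<subseteq> T \<and> T \<subseteq> rset P}" by auto
      then show ?thesis
        using sum.inter_filter[OF fT, of "\<lambda>T. (-1::int)^(card T - card S)" "\<lambda>T. T \<subseteq> rset P"] by simp
    qed
    also have "\<dots> = (if rset P = S then 1 else 0)"
    proof (cases "S \<subseteq> rset P")
      case True
      have "(\<Sum>T\<in>{T. S \<subseteq> T \<and> T \<subseteq> rset P}. (-1::int)^(card T - card S)) = (\<Sum>U\<in>Pow (rset P - S). (-1)^(card U))"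
        by (rule sup_reindex[OF True]) simp
      also have "\<dots> = (if rset P - S = {} then 1 else 0)" by (rule alt_pow) simp
      finally show ?thesis using True by auto
    next
      case False
      have e: "{T. S \<subseteq> T \<and> T \<subseteq> rset P} = {}" using False by auto
      have ne: "rset P \<noteq> S" using False by auto
      show ?thesis unfolding e using ne by simp
    qed
    finally show "(\<Sum>T\<in>{T. S \<subseteq> T}. if T \<subseteq> rset P then (-1::int)^(card T - card S) else 0) = (if rset P = S then 1 else 0)" .
  qed simp
  also have "\<dots> = int (card {P \<in> Pm m. rset P = S})" by (rule card_filter_sum[symmetric]) simp
  finally show ?thesis by simp
qed

lemma GH:
  fixes q :: int
  assumes "M < n"
  shows "(\<Sum>k\<le>n. of_nat (n choose k) * ((-1)^k * q^(Suc M - k)))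
       = (q - 1) * (\<Sum>e\<le>M. \<Sum>k\<le>e. (-1)^k * of_nat (n choose k) * q^(e - k))"
  using assms
proof (induction M)
  case 0
  have t: "of_nat (n choose k) * ((-1)^k * q^(Suc 0 - k)) = (-1)^k * of_nat (n choose k) + (if k = 0 then q - 1 else 0)" for k
    by (cases k) auto
  have "(\<Sum>k\<le>n. of_nat (n choose k) * ((-1)^k * q^(Suc 0 - k))) = (\<Sum>k\<le>n. (-1)^k * of_nat (n choose k)) + (\<Sum>k\<le>n. if k = 0 then q - 1 else 0)"
    by (simp only: t sum.distrib)
  also have "(\<Sum>k\<le>n. (-1)^k * of_nat (n choose k)) = (0::int)" using choose_alternating_sum[of n] 0 by simp
  also have "(\<Sum>k\<le>n. if k = 0 then q - 1 else 0) = q - 1" by (simp add: sum.delta)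
  finally show ?case by simp
next
  case (Suc M)
  have IH: "(\<Sum>k\<le>n. of_nat (n choose k) * ((-1)^k * q^(Suc M - k)))
       = (q - 1) * (\<Sum>e\<le>M. \<Sum>k\<le>e. (-1)^k * of_nat (n choose k) * q^(e - k))" using Suc by simp
  have t: "of_nat (n choose k) * ((-1)^k * q^(Suc (Suc M) - k))
      = of_nat (n choose k) * ((-1)^k * q^(Suc M - k)) + (if k \<le> Suc M then (q - 1) * ((-1)^k * of_nat (n choose k) * q^(Suc M - k)) else 0)" for k
  proof (cases "k \<le> Suc M")
    case True
    then have "Suc (Suc M) - k = Suc (Suc M - k)" by simp
    then show ?thesis using True by (simp add: algebra_simps)
  next
    case False
    then have "Suc (Suc M) - k = 0" "Suc M - k = 0" by auto
    then show ?thesis using False by simp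
  qed
  have "(\<Sum>k\<le>n. of_nat (n choose k) * ((-1)^k * q^(Suc (Suc M) - k)))
      = (\<Sum>k\<le>n. of_nat (n choose k) * ((-1)^k * q^(Suc M - k))) + (\<Sum>k\<le>n. if k \<le> Suc M then (q - 1) * ((-1)^k * of_nat (n choose k) * q^(Suc M - k)) else 0)"
    by (simp only: t sum.distrib)
  also have "(\<Sum>k\<le>n. if k \<le> Suc M then (q - 1) * ((-1)^k * of_nat (n choose k) * q^(Suc M - k)) else 0)
      = (\<Sum>k\<le>Suc M. (q - 1) * ((-1)^k * of_nat (n choose k) * q^(Suc M - k)))"
  proof -
    have e: "{k\<in>{..n}. k \<le> Suc M} = {..Suc M}" using Suc.prems by auto
    show ?thesis
      using sum.inter_filter[of "{..n}" "\<lambda>k. (q - 1) * ((-1)^k * of_nat (n choose k) * q^(Suc M - k))" "\<lambda>k. k \<le> Suc M"]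
      unfolding e by simp
  qed
  also have "\<dots> = (q - 1) * (\<Sum>k\<le>Suc M. (-1)^k * of_nat (n choose k) * q^(Suc M - k))"
    by (simp only: sum_distrib_left)
  finally show ?case unfolding IH by (simp add: algebra_simps)
qed

lemma count_i:
  fixes i m :: nat
  assumes "i \<le> m" "m < card (UNIV::'a::{field,finite} set)"
  shows "int (card {P \<in> (Pm m :: 'a poly set). rts P = i}) = wenger_mult (card (UNIV::'a set)) m i"
proof -
  let ?q = "card (UNIV::'a set)"
  have fS: "finite {S::'a set. card S = i}" by simp
  have step1: "int (card {P \<in> (Pm m :: 'a poly set). rts P = i}) = (\<Sum>S\<in>{S::'a set. card S = i}. int (card {P \<in> Pm m. rset P = S}))"
  proof -
    have "int (card {P \<in> (Pm m :: 'a poly set). rts P = i}) = (\<Sum>P\<in>(Pm m :: 'a poly set). if card (rset P) = i then 1 else 0)"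
      by (subst card_filter_sum) (simp_all add: rts_def rset_def)
    also have "\<dots> = (\<Sum>P\<in>(Pm m :: 'a poly set). \<Sum>S\<in>{S::'a set. card S = i}. if rset P = S then 1 else 0)"
      by (rule sum.cong) (simp_all add: sum.delta[OF fS])
    also have "\<dots> = (\<Sum>S\<in>{S::'a set. card S = i}. \<Sum>P\<in>(Pm m :: 'a poly set). if rset P = S then 1 else 0)"
      by (rule sum.swap)
    also have "\<dots> = (\<Sum>S\<in>{S::'a set. card S = i}. int (card {P \<in> Pm m. rset P = S}))"
      by (rule sum.cong) (simp_all add: card_filter_sum)
    finally show ?thesis .
  qed
  define V where "V = (\<Sum>k\<le>?q - i. of_nat ((?q - i) choose k) * ((-1::int)^k * int ?q^(Suc m - (i + k))))"
  have step2: "int (card {P \<in> (Pm m :: 'a poly set). rset P = S}) = V" if S: "card S = i" for S :: "'a set"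
  proof -
    have "int (card {P \<in> (Pm m :: 'a poly set). rset P = S})
        = (\<Sum>T\<in>{T. S \<subseteq> T}. (-1)^(card T - card S) * int (?q ^ (Suc m - card T)))" by (rule E_card)
    also have "\<dots> = (\<Sum>T\<in>{T. S \<subseteq> T \<and> T \<subseteq> UNIV}. (\<lambda>k. (-1::int)^k * int ?q^(Suc m - (i + k))) (card T - card S))"
    proof (rule sum.cong)
      fix T :: "'a set" assume "T \<in> {T. S \<subseteq> T \<and> T \<subseteq> UNIV}"
      then have "card S \<le> card T" by (intro card_mono) auto
      then have "card T = i + (card T - card S)" using S by simp
      then show "(-1)^(card T - card S) * int (?q ^ (Suc m - card T)) = (\<lambda>k. (-1::int)^k * int ?q^(Suc m - (i + k))) (card T - card S)"
        by (simp add: of_nat_power)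
    qed simp
    also have "\<dots> = (\<Sum>U\<in>Pow (UNIV - S). (\<lambda>k. (-1::int)^k * int ?q^(Suc m - (i + k))) (card U))"
      by (rule sup_reindex) simp_all
    also have "\<dots> = (\<Sum>k\<le>card (UNIV - S). of_nat (card (UNIV - S) choose k) * ((-1::int)^k * int ?q^(Suc m - (i + k))))"
      by (rule sum_pow_card) simp
    also have "card (UNIV - S) = ?q - i" using S by (simp add: card_Diff_subset)
    finally show ?thesis by (simp add: V_def)
  qed
  have step3: "int (card {P \<in> (Pm m :: 'a poly set). rts P = i}) = int (?q choose i) * V"
  proof -
    have a: "int (card {P \<in> (Pm m :: 'a poly set). rts P = i}) = (\<Sum>S\<in>{S::'a set. card S = i}. V)"
      unfolding step1 by (rule sum.cong) (simp_all add: step2)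
    have b: "card {S::'a set. card S = i} = ?q choose i"
      using n_subsets[of "UNIV::'a set" i] by simp
    show ?thesis unfolding a using b by simp
  qed
  define M where "M = m - i"
  define n where "n = ?q - i"
  have Mn: "M < n" using assms by (simp add: M_def n_def)
  have V2: "V = (\<Sum>k\<le>n. of_nat (n choose k) * ((-1)^k * (int ?q)^(Suc M - k)))"
    unfolding V_def n_def M_def
    by (rule sum.cong) (use assms in auto)
  have W: "wenger_mult ?q m i = (int ?q - 1) * int (?q choose i) * (\<Sum>e\<le>M. \<Sum>k\<le>e. (-1)^k * of_nat (n choose k) * (int ?q)^(e - k))"
  proof -
    have "(\<Sum>d = i..m. \<Sum>k = 0..d - i. (-1) ^ k * int ((?q - i) choose k) * int ?q ^ (d - i - k))
        = (\<Sum>e = 0..M. \<Sum>k = 0..(e + i) - i. (-1) ^ k * int ((?q - i) choose k) * int ?q ^ ((e + i) - i - k))"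
    proof -
      have "{i..m} = {0 + i..M + i}" using assms by (simp add: M_def)
      then show ?thesis by (simp only: sum.shift_bounds_cl_nat_ivl)
    qed
    also have "\<dots> = (\<Sum>e\<le>M. \<Sum>k\<le>e. (-1)^k * of_nat (n choose k) * (int ?q)^(e - k))"
      by (simp add: n_def atLeast0AtMost)
    finally show ?thesis by (simp add: wenger_mult_def)
  qed
  show ?thesis unfolding step3 V2 GH[OF Mn] W by (simp add: algebra_simps)
qed

definition Yset :: "nat \<Rightarrow> 'a::{field,finite} poly set" where "Yset m = {P \<in> Pm m. 0 < rts P}"
definition Zset :: "nat \<Rightarrow> 'a::{field,finite} poly set" where "Zset m = {P \<in> Pm m. rts P = 0}"

lemma finite_Am[simp]: "finite (Am m :: 'a::{field,finite} poly set)"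
  by (rule finite_subset[OF _ finite_Pm[of m]]) (auto simp: Am_def Pm_def)

lemma rts_const_diff: "rts (A - [:c:]) = card (fib A c)"
  by (simp add: rts_def fib_def)

lemma card_Zset:
  "card (Zset m :: 'a::{field,finite} poly set) = (\<Sum>A\<in>(Am m :: 'a poly set). card (UNIV::'a set) - card (range (poly A)))"
proof -
  let ?D = "{(A, c). A \<in> (Am m :: 'a poly set) \<and> c \<notin> range (poly A)}"
  have D: "?D = Sigma (Am m) (\<lambda>A. UNIV - range (poly A))" by auto
  have cD: "card ?D = (\<Sum>A\<in>(Am m :: 'a poly set). card (UNIV::'a set) - card (range (poly A)))"
    unfolding D by (simp add: card_SigmaI card_Diff_subset)
  have inj: "inj_on (\<lambda>(A, c). A - [:c:]) ?D"
  proof (rule inj_onI, clarify)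
    fix A A' :: "'a poly" and c c' :: 'a assume a: "A \<in> Am m" "A' \<in> Am m" "A - [:c:] = A' - [:c':]"
    have "coeff (A - [:c:]) 0 = coeff (A' - [:c':]) 0" using a(3) by simp
    then have cc: "c = c'" using a(1,2) by (simp add: Am_def algebra_simps)
    then show "A = A' \<and> c = c'" using a(3) by simp
  qed
  have img: "(\<lambda>(A, c). A - [:c:]) ` ?D = Zset m"
  proof (intro equalityI subsetI)
    fix P assume "P \<in> (\<lambda>(A, c). A - [:c:]) ` ?D"
    then obtain A c where A: "A \<in> Am m" "c \<notin> range (poly A)" "P = A - [:c:]" by auto
    have "degree P \<le> m" using A(1,3) degree_diff_le[of A m "[:c:]"] by (simp add: Am_def)
    moreover have "fib A c = {}" using A(2) by (auto simp: fib_def)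
    ultimately show "P \<in> Zset m" using A(3) by (simp add: Zset_def Pm_def rts_const_diff)
  next
    fix P :: "'a poly" assume P: "P \<in> Zset m"
    define c where "c = - coeff P 0"
    define A where "A = P + [:c:]"
    have dA: "degree A \<le> m" using P degree_add_le[of P m "[:c:]"] by (simp add: A_def Zset_def Pm_def)
    have A0: "coeff A 0 = 0" by (simp add: A_def c_def)
    have nr: "poly P s \<noteq> 0" for s
    proof
      assume "poly P s = 0"
      then have "card {s. poly P s = 0} > 0" by (auto simp: card_gt_0_iff)
      then show False using P by (simp add: Zset_def rts_def)
    qed
    have "c \<notin> range (poly A)" using nr by (auto simp: A_def)
    moreover have "P = A - [:c:]" by (simp add: A_def)
    ultimately show "P \<in> (\<lambda>(A, c). A - [:c:]) ` ?D" using dA A0 by (auto simp: Am_def)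
  qed
  show ?thesis using card_image[OF inj] img cD by simp
qed

lemma sum_fib_card:
  fixes A :: "'a::{field,finite} poly"
  shows "(\<Sum>c\<in>range (poly A). card (fib A c)) = card (UNIV::'a set)"
proof -
  have "UNIV = (\<Union>c\<in>range (poly A). fib A c)" by (auto simp: fib_def)
  then have "card (UNIV::'a set) = card (\<Union>c\<in>range (poly A). fib A c)" by simp
  also have "\<dots> = (\<Sum>c\<in>range (poly A). card (fib A c))"
    by (rule card_UN_disjoint) (auto simp: fib_def)
  finally show ?thesis by simp
qed

definition PKset :: "nat \<Rightarrow> ('a::{field,finite} poly, 'a) eidx set" where
  "PKset m = {PK A c j | A c j. A \<in> Am m \<and> c \<in> range (poly A) \<and> 0 < j \<and> j < card (fib A c)}"

lemma card_PKset:
  "card (PKset m :: ('a::{field,finite} poly, 'a) eidx set) = (\<Sum>A\<in>(Am m :: 'a poly set). card (UNIV::'a set) - card (range (poly A)))"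
proof -
  let ?S = "Sigma (Am m :: 'a poly set) (\<lambda>A. Sigma (range (poly A)) (\<lambda>c. {j. 0 < j \<and> j < card (fib A c)}))"
  have img: "PKset m = (\<lambda>(A, c, j). PK A c j) ` ?S"
  proof (intro equalityI subsetI)
    fix x :: "('a poly, 'a) eidx" assume "x \<in> PKset m"
    then obtain A c j where "x = PK A c j" "A \<in> Am m" "c \<in> range (poly A)" "0 < j" "j < card (fib A c)"
      by (auto simp: PKset_def)
    then show "x \<in> (\<lambda>(A, c, j). PK A c j) ` ?S" by (intro image_eqI[of _ _ "(A, c, j)"]) auto
  qed (auto simp: PKset_def)
  have inj: "inj_on (\<lambda>(A, c, j). PK A c j) ?S" by (auto simp: inj_on_def)
  have "card (PKset m :: ('a poly, 'a) eidx set) = card ?S" unfolding img by (rule card_image[OF inj])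
  also have "\<dots> = (\<Sum>A\<in>(Am m :: 'a poly set). \<Sum>c\<in>range (poly A). card {j. 0 < j \<and> j < card (fib A c)})"
    by (simp add: card_SigmaI)
  also have "\<dots> = (\<Sum>A\<in>(Am m :: 'a poly set). card (UNIV::'a set) - card (range (poly A)))"
  proof (rule sum.cong)
    fix A :: "'a poly" assume "A \<in> Am m"
    have ne: "c \<in> range (poly A) \<Longrightarrow> 1 \<le> card (fib A c)" for c
      by (auto simp: fib_def card_gt_0_iff Suc_le_eq)
    have cj: "card {j. 0 < j \<and> j < N} = N - 1" for N :: nat
    proof -
      have "{j. 0 < j \<and> j < N} = {1..<N}" by auto
      then show ?thesis by simp
    qed
    have "int (\<Sum>c\<in>range (poly A). card {j. 0 < j \<and> j < card (fib A c)}) = (\<Sum>c\<in>range (poly A). int (card (fib A c)) - 1)"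
      using ne by (simp add: cj of_nat_diff)
    also have "\<dots> = int (card (UNIV::'a set)) - int (card (range (poly A)))"
      using sum_fib_card[of A] by (simp add: sum_subtractf flip: of_nat_sum)
    also have "\<dots> = int (card (UNIV::'a set) - card (range (poly A)))"
      by (simp add: card_mono of_nat_diff)
    finally show "(\<Sum>c\<in>range (poly A). card {j. 0 < j \<and> j < card (fib A c)}) = card (UNIV::'a set) - card (range (poly A))"
      by linarith
  qed simp
  finally show ?thesis .
qed

lemma finite_PKset[simp]: "finite (PKset m :: ('a::{field,finite} poly, 'a) eidx set)"
proof -
  let ?S = "Sigma (Am m :: 'a poly set) (\<lambda>A. Sigma (range (poly A)) (\<lambda>c. {j. 0 < j \<and> j < card (fib A c)}))"
  have img: "PKset m = (\<lambda>(A, c, j). PK A c j) ` ?S"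
  proof (intro equalityI subsetI)
    fix x :: "('a poly, 'a) eidx" assume "x \<in> PKset m"
    then obtain A c j where "x = PK A c j" "A \<in> Am m" "c \<in> range (poly A)" "0 < j" "j < card (fib A c)"
      by (auto simp: PKset_def)
    then show "x \<in> (\<lambda>(A, c, j). PK A c j) ` ?S" by (intro image_eqI[of _ _ "(A, c, j)"]) auto
  qed (auto simp: PKset_def)
  have "finite ?S" by (intro finite_SigmaI) auto
  then show ?thesis unfolding img by simp
qed

lemma JJ_split: "(JJ m :: ('a::{field,finite} poly, 'a) eidx set) = (\<lambda>(b, P). LP b P :: ('a poly, 'a) eidx) ` (UNIV \<times> Yset m) \<union> LZ ` Zset m \<union> PKset m"
  by (auto simp: JJ_def Yset_def Zset_def PKset_def)

lemma finite_JJ[simp]: "finite (JJ m :: ('a::{field,finite} poly, 'a) eidx set)"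
proof -
  have "finite (Yset m :: 'a poly set)" "finite (Zset m :: 'a poly set)" by (auto simp: Yset_def Zset_def)
  then show ?thesis unfolding JJ_split by auto
qed

lemma card_JJ: "card (JJ m :: ('a::{field,finite} poly, 'a) eidx set) = 2 * card (UNIV::'a set) ^ Suc m"
proof -
  have fY: "finite (Yset m :: 'a poly set)" and fZ: "finite (Zset m :: 'a poly set)" by (auto simp: Yset_def Zset_def)
  have c1: "card ((\<lambda>(b, P). LP b P :: ('a poly, 'a) eidx) ` (UNIV \<times> (Yset m :: 'a poly set))) = 2 * card (Yset m :: 'a poly set)"
  proof -
    have "inj_on (\<lambda>(b, P). LP b P :: ('a poly, 'a) eidx) (UNIV \<times> (Yset m :: 'a poly set))" by (auto simp: inj_on_def)
    then have "card ((\<lambda>(b, P). LP b P :: ('a poly, 'a) eidx) ` (UNIV \<times> (Yset m :: 'a poly set))) = card ((UNIV::bool set) \<times> (Yset m :: 'a poly set))"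
      by (rule card_image)
    also have "\<dots> = card (UNIV::bool set) * card (Yset m :: 'a poly set)" by (rule card_cartesian_product)
    finally show ?thesis by simp
  qed
  have c2: "card ((LZ :: 'a poly \<Rightarrow> ('a poly, 'a) eidx) ` (Zset m :: 'a poly set)) = card (Zset m :: 'a poly set)"
    by (rule card_image) (auto simp: inj_on_def)
  have YZ: "card (Yset m :: 'a poly set) + card (Zset m :: 'a poly set) = card (UNIV::'a set) ^ Suc m"
  proof -
    have "Pm m = Yset m \<union> (Zset m :: 'a poly set)" by (auto simp: Yset_def Zset_def)
    moreover have "card (Yset m \<union> (Zset m :: 'a poly set)) = card (Yset m :: 'a poly set) + card (Zset m :: 'a poly set)"
      by (rule card_Un_disjoint[OF fY fZ]) (auto simp: Yset_def Zset_def)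
    ultimately have "card (Pm m :: 'a poly set) = card (Yset m :: 'a poly set) + card (Zset m :: 'a poly set)"
      by simp
    then show ?thesis using card_Pm by metis
  qed
  have d1: "(\<lambda>(b, P). LP b P :: ('a poly, 'a) eidx) ` (UNIV \<times> (Yset m :: 'a poly set)) \<inter> (LZ ` Zset m \<union> PKset m) = {}"
    by (auto simp: PKset_def)
  have d2: "LZ ` (Zset m :: 'a poly set) \<inter> PKset m = {}" by (auto simp: PKset_def)
  have "card (JJ m :: ('a poly, 'a) eidx set) = card ((\<lambda>(b, P). LP b P :: ('a poly, 'a) eidx) ` (UNIV \<times> (Yset m :: 'a poly set))) + (card ((LZ :: 'a poly \<Rightarrow> ('a poly, 'a) eidx) ` (Zset m :: 'a poly set)) + card (PKset m :: ('a poly, 'a) eidx set))"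
    unfolding JJ_split using fY fZ d1 d2
    by (simp add: card_Un_disjoint Un_assoc)
  also have "\<dots> = 2 * card (Yset m :: 'a poly set) + 2 * card (Zset m :: 'a poly set)"
    unfolding c1 c2 card_PKset card_Zset[symmetric] by simp
  finally show ?thesis using YZ by simp
qed

lemma vs_props:
  "distinct (wenger_vertex_list m :: ('a::{field,finite} list + 'a list) list)
   \<and> set (wenger_vertex_list m :: ('a list + 'a list) list) = Inl ` Lv m \<union> Inr ` Lv m"
proof -
  have "finite (wenger_vertices m :: ('a list + 'a list) set)" unfolding wv_eq by simp
  then have "\<exists>xs. distinct xs \<and> set xs = (wenger_vertices m :: ('a list + 'a list) set)"
    using finite_distinct_list by blast
  then have "distinct (wenger_vertex_list m :: ('a list + 'a list) list) \<and> set (wenger_vertex_list m :: ('a list + 'a list) list) = wenger_vertices m"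
    unfolding wenger_vertex_list_def by (rule someI_ex)
  then show ?thesis unfolding wv_eq .
qed

lemma length_vs: "length (wenger_vertex_list m :: ('a::{field,finite} list + 'a list) list) = 2 * card (UNIV::'a set) ^ Suc m"
proof -
  let ?vs = "wenger_vertex_list m :: ('a list + 'a list) list"
  have "length ?vs = card (set ?vs)" using vs_props[of m, where 'a='a] distinct_card by metis
  also have "\<dots> = card (Inl ` (Lv m :: 'a list set) \<union> Inr ` (Lv m :: 'a list set) :: ('a list + 'a list) set)" using vs_props[of m, where 'a='a] by simp
  also have "\<dots> = card (Inl ` (Lv m :: 'a list set) :: ('a list + 'a list) set) + card (Inr ` (Lv m :: 'a list set) :: ('a list + 'a list) set)"
    by (rule card_Un_disjoint) auto
  also have "\<dots> = 2 * card (UNIV::'a set) ^ Suc m"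
    by (simp add: card_image card_Lv)
  finally show ?thesis .
qed

lemma wm_eq: "wenger_matrix m TYPE('a::{field,finite}) =
  mat (length (wenger_vertex_list m :: ('a list + 'a list) list)) (length (wenger_vertex_list m :: ('a list + 'a list) list))
    (\<lambda>(i, k). Rw m ((wenger_vertex_list m :: ('a list + 'a list) list) ! i) ((wenger_vertex_list m :: ('a list + 'a list) list) ! k))"
  unfolding wenger_matrix_def Let_def Rw_def by simp

lemma char_poly_complex:
  "char_poly (map_mat complex_of_real (wenger_matrix m TYPE('a::{field,finite})))
   = (\<Prod>j\<in>(JJ m :: ('a poly, 'a) eidx set). [:- complex_of_real (ev j), 1:])"
proof -
  let ?vs = "wenger_vertex_list m :: ('a list + 'a list) list"
  have vs: "distinct ?vs" and sv: "set ?vs = Inl ` Lv m \<union> Inr ` Lv m" using vs_props[of m, where 'a='a] by auto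
  show ?thesis unfolding wm_eq
  proof (rule spectral_char_poly[where c = "cc m"])
    show "distinct ?vs" by (rule vs)
    show "finite (JJ m :: ('a poly, 'a) eidx set)" by simp
    show "card (JJ m :: ('a poly, 'a) eidx set) = length ?vs" by (simp add: card_JJ length_vs)
    fix j :: "('a poly, 'a) eidx" and v assume j: "j \<in> JJ m" and v: "v \<in> set ?vs"
    show "(\<Sum>w\<in>set ?vs. complex_of_real (Rw m v w) * ef m j w) = complex_of_real (ev j) * ef m j v"
      unfolding sv by (rule eig_all[OF j v[unfolded sv]])
  next
    fix j j' :: "('a poly, 'a) eidx" assume j: "j \<in> JJ m" and j': "j' \<in> JJ m"
    show "(\<Sum>v\<in>set ?vs. cnj (ef m j v) * ef m j' v) = (if j = j' then cc m j else 0)"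
      unfolding sv by (rule orth_all[OF j j'])
  next
    fix j :: "('a poly, 'a) eidx" assume "j \<in> JJ m"
    then show "cc m j \<noteq> 0" by (rule cc_nz)
  qed
qed

lemma wm_carrier: "wenger_matrix m TYPE('a::{field,finite}) \<in> carrier_mat (length (wenger_vertex_list m :: ('a list + 'a list) list)) (length (wenger_vertex_list m :: ('a list + 'a list) list))"
  unfolding wm_eq by simp

lemma order_wm:
  "order x (char_poly (wenger_matrix m TYPE('a::{field,finite}))) = card {j \<in> (JJ m :: ('a poly, 'a) eidx set). ev j = x}"
proof -
  interpret oh: map_poly_inj_idom_divide_hom complex_of_real ..
  have "order x (char_poly (wenger_matrix m TYPE('a))) = order (complex_of_real x) (map_poly complex_of_real (char_poly (wenger_matrix m TYPE('a))))"
    by (rule oh.order_hom[symmetric])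
  also have "map_poly complex_of_real (char_poly (wenger_matrix m TYPE('a))) = char_poly (map_mat complex_of_real (wenger_matrix m TYPE('a)))"
    by (rule of_real_hom.char_poly_hom[OF wm_carrier, symmetric])
  also have "\<dots> = (\<Prod>j\<in>(JJ m :: ('a poly, 'a) eidx set). [:- complex_of_real (ev j), 1:])" by (rule char_poly_complex)
  also have "order (complex_of_real x) \<dots> = card {j \<in> (JJ m :: ('a poly, 'a) eidx set). complex_of_real (ev j) = complex_of_real x}"
    by (rule order_prod_linear) simp
  finally show ?thesis by simp
qed

lemma eig_wm:
  "eigenvalue (wenger_matrix m TYPE('a::{field,finite})) x \<longleftrightarrow> (\<exists>j\<in>(JJ m :: ('a poly, 'a) eidx set). ev j = x)"
proof -
  have "eigenvalue (wenger_matrix m TYPE('a)) x \<longleftrightarrow> poly (char_poly (wenger_matrix m TYPE('a))) x = 0"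
    by (rule eigenvalue_root_char_poly[OF wm_carrier])
  also have "\<dots> \<longleftrightarrow> complex_of_real (poly (char_poly (wenger_matrix m TYPE('a))) x) = 0" by simp
  also have "complex_of_real (poly (char_poly (wenger_matrix m TYPE('a))) x)
      = poly (map_poly complex_of_real (char_poly (wenger_matrix m TYPE('a)))) (complex_of_real x)"
    by (rule of_real_hom.poly_map_poly[symmetric])
  also have "map_poly complex_of_real (char_poly (wenger_matrix m TYPE('a))) = char_poly (map_mat complex_of_real (wenger_matrix m TYPE('a)))"
    by (rule of_real_hom.char_poly_hom[OF wm_carrier, symmetric])
  also have "\<dots> = (\<Prod>j\<in>(JJ m :: ('a poly, 'a) eidx set). [:- complex_of_real (ev j), 1:])" by (rule char_poly_complex)
  also have "poly \<dots> (complex_of_real x) = 0 \<longleftrightarrow> (\<exists>j\<in>(JJ m :: ('a poly, 'a) eidx set). ev j = x)"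
    by (auto simp: poly_prod_0)
  finally show ?thesis .
qed

lemma rts_0: "rts (0::'a::{field,finite} poly) = card (UNIV::'a set)"
  by (simp add: rts_def)

lemma rts_le: "P \<noteq> 0 \<Longrightarrow> degree P \<le> m \<Longrightarrow> rts (P::'a::{field,finite} poly) \<le> m"
  unfolding rts_def using card_poly_roots_bound[of P] by simp

lemma exists_rts:
  assumes "i \<le> m" "i \<le> card (UNIV::'a::{field,finite} set)"
  shows "\<exists>P::'a poly. P \<in> Pm m \<and> rts P = i"
proof -
  obtain S :: "'a set" where S: "card S = i" "finite S"
    using obtain_subset_with_card_n[OF assms(2)] by blast
  define P where "P = (\<Prod>t\<in>S. [:-t, 1:])"
  have "degree P = i" using prodT_props[OF S(2)] S by (simp add: P_def)
  moreover have "{s. poly P s = 0} = S" using S(2) by (auto simp: P_def poly_prod_0)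
  ultimately show ?thesis using assms S by (intro exI[of _ P]) (simp add: Pm_def rts_def)
qed

lemma q_ge2: "2 \<le> card (UNIV::'a::{field,finite} set)"
proof -
  have "card {0::'a, 1} = 2" by simp
  moreover have "card {0::'a, 1} \<le> card (UNIV::'a set)" by (rule card_mono) auto
  ultimately show ?thesis by simp
qed

lemma sig_0: "sig (0::'a::{field,finite} poly) = real (card (UNIV::'a set))"
  by (simp add: sig_def rts_0)

lemma JJ_cases:
  assumes "j \<in> JJ m"
  obtains (LP) b P where "j = LP b P" "P \<in> Pm m" "0 < rts P"
    | (LZ) P where "j = LZ P" "P \<in> Pm m" "rts P = 0"
    | (PK) A c k where "j = PK A c k" "A \<in> Am m" "c \<in> range (poly A)" "0 < k" "k < card (fib A c)"
  using assms unfolding JJ_def by blast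

lemma LP_in_JJ: "P \<in> Pm m \<Longrightarrow> 0 < rts P \<Longrightarrow> LP b P \<in> JJ m"
  by (auto simp: JJ_def)

lemma LZ_in_JJ: "P \<in> Pm m \<Longrightarrow> rts P = 0 \<Longrightarrow> LZ P \<in> JJ m"
  by (auto simp: JJ_def)

lemma pos_level:
  fixes i :: nat
  assumes i: "1 \<le> i" "i \<le> m" and mq: "m < card (UNIV::'a::{field,finite} set)"
  shows "{j \<in> (JJ m :: ('a poly, 'a) eidx set). ev j = sqrt (real i * real (card (UNIV::'a set)))}
         = LP True ` {P \<in> Pm m. rts P = i}"
    and "{j \<in> (JJ m :: ('a poly, 'a) eidx set). ev j = - sqrt (real i * real (card (UNIV::'a set)))}
         = LP False ` {P \<in> Pm m. rts P = i}"
proof -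
  let ?q = "card (UNIV::'a set)"
  have qpos: "0 < ?q" using q_ge2[where 'a='a] by simp
  have r: "0 < sqrt (real i * real ?q)" using i qpos by simp
  have sg_eq: "sig P = sqrt (real i * real ?q) \<longleftrightarrow> rts P = i" for P :: "'a poly"
  proof -
    have "sig P = sqrt (real i * real ?q) \<longleftrightarrow> real (?q * rts P) = real i * real ?q"
      by (simp add: sig_def)
    also have "\<dots> \<longleftrightarrow> rts P = i" using qpos by (simp add: mult.commute)
    finally show ?thesis .
  qed
  have sig_nn: "0 \<le> sig P" for P :: "'a poly" by (simp add: sig_def)
  show "{j \<in> (JJ m :: ('a poly, 'a) eidx set). ev j = sqrt (real i * real ?q)} = LP True ` {P \<in> Pm m. rts P = i}"
  proof (intro equalityI subsetI)
    fix j :: "('a poly, 'a) eidx" assume "j \<in> {j \<in> JJ m. ev j = sqrt (real i * real ?q)}"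
    then have j: "j \<in> JJ m" "ev j = sqrt (real i * real ?q)" by auto
    from j(1) show "j \<in> LP True ` {P \<in> Pm m. rts P = i}"
    proof (cases rule: JJ_cases)
      case (LP b P)
      show ?thesis
      proof (cases b)
        case True
        then have "rts P = i" using j(2) LP sg_eq by (simp add: sg_def)
        then show ?thesis using LP True by auto
      next
        case False
        then have "- sig P = sqrt (real i * real ?q)" using j(2) LP by (simp add: sg_def)
        then show ?thesis using sig_nn[of P] r by linarith
      qed
    next
      case LZ then show ?thesis using j(2) r by simp
    next
      case PK then show ?thesis using j(2) r by simp
    qed
  next
    fix j :: "('a poly, 'a) eidx" assume "j \<in> LP True ` {P \<in> Pm m. rts P = i}"
    then obtain P where P: "j = LP True P" "P \<in> Pm m" "rts P = i" by auto
    then show "j \<in> {j \<in> JJ m. ev j = sqrt (real i * real ?q)}"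
      using i LP_in_JJ[of P m True] sg_eq[of P] by (simp add: sg_def)
  qed
  show "{j \<in> (JJ m :: ('a poly, 'a) eidx set). ev j = - sqrt (real i * real ?q)} = LP False ` {P \<in> Pm m. rts P = i}"
  proof (intro equalityI subsetI)
    fix j :: "('a poly, 'a) eidx" assume "j \<in> {j \<in> JJ m. ev j = - sqrt (real i * real ?q)}"
    then have j: "j \<in> JJ m" "ev j = - sqrt (real i * real ?q)" by auto
    from j(1) show "j \<in> LP False ` {P \<in> Pm m. rts P = i}"
    proof (cases rule: JJ_cases)
      case (LP b P)
      show ?thesis
      proof (cases b)
        case False
        then have "rts P = i" using j(2) LP sg_eq by (simp add: sg_def)
        then show ?thesis using LP False by auto
      next
        case True
        then have "sig P = - sqrt (real i * real ?q)" using j(2) LP by (simp add: sg_def)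
        then show ?thesis using sig_nn[of P] r by linarith
      qed
    next
      case LZ then show ?thesis using j(2) r by simp
    next
      case PK then show ?thesis using j(2) r by simp
    qed
  next
    fix j :: "('a poly, 'a) eidx" assume "j \<in> LP False ` {P \<in> Pm m. rts P = i}"
    then obtain P where P: "j = LP False P" "P \<in> Pm m" "rts P = i" by auto
    then show "j \<in> {j \<in> JJ m. ev j = - sqrt (real i * real ?q)}"
      using i LP_in_JJ[of P m False] sg_eq[of P] by (simp add: sg_def)
  qed
qed

lemma zero_level:
  "{j \<in> (JJ m :: ('a::{field,finite} poly, 'a) eidx set). ev j = 0} = LZ ` Zset m \<union> PKset m"
proof (intro equalityI subsetI)
  fix j :: "('a poly, 'a) eidx" assume "j \<in> {j \<in> JJ m. ev j = 0}"
  then have j: "j \<in> JJ m" "ev j = 0" by auto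
  from j(1) show "j \<in> LZ ` Zset m \<union> PKset m"
  proof (cases rule: JJ_cases)
    case (LP b P)
    then have "sig P \<noteq> 0" using sig_pos[of P] by simp
    then show ?thesis using j(2) LP by (cases b) (simp_all add: sg_def)
  next
    case LZ then show ?thesis by (auto simp: Zset_def)
  next
    case PK then show ?thesis by (auto simp: PKset_def)
  qed
qed (auto simp: JJ_def Zset_def PKset_def)

lemma inj_LP: "inj (LP b)" by (auto simp: inj_def)

theorem theorem1:
  fixes m :: nat
  defines "q \<equiv> card (UNIV :: 'a::{field,finite} set)"
  assumes "1 \<le> m" and "m \<le> q - 1"
  shows "{ev. eigenvalue (wenger_matrix m TYPE('a)) ev} =
           {real q, - real q, 0} \<union>
           {s * sqrt (real i * real q) | s i. s \<in> {1, -1} \<and> i \<in> {1..m}}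
       \<and> (\<forall>i\<in>{1..m}.
           int (order (sqrt (real i * real q)) (char_poly (wenger_matrix m TYPE('a)))) = wenger_mult q m i
         \<and> int (order (- sqrt (real i * real q)) (char_poly (wenger_matrix m TYPE('a)))) = wenger_mult q m i)
       \<and> int (order 0 (char_poly (wenger_matrix m TYPE('a)))) = 2 * wenger_mult q m 0"
proof -
  have q2: "2 \<le> q" unfolding q_def by (rule q_ge2)
  have mq: "m < q" using assms q2 by simp
  have part1: "{ev. eigenvalue (wenger_matrix m TYPE('a)) ev} =
           {real q, - real q, 0} \<union> {s * sqrt (real i * real q) | s i. s \<in> {1, -1} \<and> i \<in> {1..m}}"
  proof (intro equalityI subsetI)
    fix x assume "x \<in> {ev. eigenvalue (wenger_matrix m TYPE('a)) ev}"
    then obtain j :: "('a poly, 'a) eidx" where j: "j \<in> JJ m" "ev j = x" using eig_wm by blast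
    from j(1) show "x \<in> {real q, - real q, 0} \<union> {s * sqrt (real i * real q) | s i. s \<in> {1, -1} \<and> i \<in> {1..m}}"
    proof (cases rule: JJ_cases)
      case (LP b P)
      show ?thesis
      proof (cases "P = 0")
        case True
        then have "x = sg b * real q" using j LP by (simp add: sig_0 q_def)
        then show ?thesis by (cases b) (auto simp: sg_def)
      next
        case False
        have "rts P \<le> m" using rts_le[OF False] LP by (simp add: Pm_def)
        moreover have "x = sg b * sqrt (real (rts P) * real q)" using j LP by (simp add: sig_def q_def mult.commute)
        moreover have "sg b \<in> {1, -1}" by (simp add: sg_def)
        ultimately show ?thesis using LP by fastforce
      qed
    next
      case LZ then show ?thesis using j by simp
    next
      case PK then show ?thesis using j by simp
    qed
  next
    fix x assume x: "x \<in> {real q, - real q, 0} \<union> {s * sqrt (real i * real q) | s i. s \<in> {1, -1} \<and> i \<in> {1..m}}"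
    have z: "(0::'a poly) \<in> Pm m" "0 < rts (0::'a poly)" using q_ge2[where 'a='a] by (auto simp: Pm_def rts_0)
    have o: "(1::'a poly) \<in> Pm m" "rts (1::'a poly) = 0" by (auto simp: Pm_def rts_def)
    have "\<exists>j\<in>(JJ m :: ('a poly, 'a) eidx set). ev j = x"
    proof -
      consider "x = real q" | "x = - real q" | "x = 0" | s i where "s \<in> {1, -1}" "i \<in> {1..m}" "x = s * sqrt (real i * real q)"
        using x by blast
      then show ?thesis
      proof cases
        case 1
        then show ?thesis using LP_in_JJ[OF z, of True] by (intro bexI[of _ "LP True 0"]) (simp_all add: sig_0 sg_def q_def)
      next
        case 2
        then show ?thesis using LP_in_JJ[OF z, of False] by (intro bexI[of _ "LP False 0"]) (simp_all add: sig_0 sg_def q_def)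
      next
        case 3
        then show ?thesis using LZ_in_JJ[OF o] by (intro bexI[of _ "LZ 1"]) simp_all
      next
        case (4 s i)
        have "i \<le> m" "i \<le> card (UNIV::'a set)" using 4 mq by (auto simp: q_def)
        then have "\<exists>P::'a poly. P \<in> Pm m \<and> rts P = i" by (rule exists_rts)
        then obtain P :: "'a poly" where P: "P \<in> Pm m" "rts P = i" by blast
        have ip: "0 < rts P" using P 4 by simp
        have "ev (LP (s = 1) P) = x" using 4 P by (auto simp: sg_def sig_def q_def mult.commute)
        then show ?thesis using LP_in_JJ[OF P(1) ip] by blast
      qed
    qed
    then show "x \<in> {ev. eigenvalue (wenger_matrix m TYPE('a)) ev}" using eig_wm by blast
  qed
  have part2: "\<forall>i\<in>{1..m}.
           int (order (sqrt (real i * real q)) (char_poly (wenger_matrix m TYPE('a)))) = wenger_mult q m i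
         \<and> int (order (- sqrt (real i * real q)) (char_poly (wenger_matrix m TYPE('a)))) = wenger_mult q m i"
  proof
    fix i assume i: "i \<in> {1..m}"
    have ci: "int (card {P \<in> (Pm m :: 'a poly set). rts P = i}) = wenger_mult q m i"
      using count_i[of i m, where 'a='a] i mq by (simp add: q_def)
    have i1: "1 \<le> i" "i \<le> m" using i by auto
    have pl1: "{j \<in> (JJ m :: ('a poly, 'a) eidx set). ev j = sqrt (real i * real q)} = LP True ` {P \<in> Pm m. rts P = i}"
      using pos_level(1)[OF i1 mq[unfolded q_def]] by (simp add: q_def)
    have pl2: "{j \<in> (JJ m :: ('a poly, 'a) eidx set). ev j = - sqrt (real i * real q)} = LP False ` {P \<in> Pm m. rts P = i}"
      using pos_level(2)[OF i1 mq[unfolded q_def]] by (simp add: q_def)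
    have "order (sqrt (real i * real q)) (char_poly (wenger_matrix m TYPE('a))) = card {j \<in> (JJ m :: ('a poly, 'a) eidx set). ev j = sqrt (real i * real q)}"
      by (rule order_wm)
    also have "\<dots> = card (LP True ` {P \<in> (Pm m :: 'a poly set). rts P = i} :: ('a poly, 'a) eidx set)" by (simp only: pl1)
    also have "\<dots> = card {P \<in> (Pm m :: 'a poly set). rts P = i}" by (rule card_image) (simp add: inj_on_def)
    finally have o1: "order (sqrt (real i * real q)) (char_poly (wenger_matrix m TYPE('a))) = card {P \<in> (Pm m :: 'a poly set). rts P = i}" .
    have "order (- sqrt (real i * real q)) (char_poly (wenger_matrix m TYPE('a))) = card {j \<in> (JJ m :: ('a poly, 'a) eidx set). ev j = - sqrt (real i * real q)}"
      by (rule order_wm)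
    also have "\<dots> = card (LP False ` {P \<in> (Pm m :: 'a poly set). rts P = i} :: ('a poly, 'a) eidx set)" by (simp only: pl2)
    also have "\<dots> = card {P \<in> (Pm m :: 'a poly set). rts P = i}" by (rule card_image) (simp add: inj_on_def)
    finally have o2: "order (- sqrt (real i * real q)) (char_poly (wenger_matrix m TYPE('a))) = card {P \<in> (Pm m :: 'a poly set). rts P = i}" .
    show "int (order (sqrt (real i * real q)) (char_poly (wenger_matrix m TYPE('a)))) = wenger_mult q m i
         \<and> int (order (- sqrt (real i * real q)) (char_poly (wenger_matrix m TYPE('a)))) = wenger_mult q m i"
      using ci o1 o2 by simp
  qed
  have part3: "int (order 0 (char_poly (wenger_matrix m TYPE('a)))) = 2 * wenger_mult q m 0"
  proof -
    have fZ: "finite (Zset m :: 'a poly set)" by (simp add: Zset_def)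
    have "order 0 (char_poly (wenger_matrix m TYPE('a))) = card ((LZ :: 'a poly \<Rightarrow> ('a poly, 'a) eidx) ` Zset m \<union> PKset m)"
      unfolding order_wm zero_level ..
    also have "\<dots> = card ((LZ :: 'a poly \<Rightarrow> ('a poly, 'a) eidx) ` Zset m) + card (PKset m :: ('a poly, 'a) eidx set)"
      by (rule card_Un_disjoint) (use fZ finite_PKset[of m, where 'a='a] in \<open>auto simp: PKset_def\<close>)
    also have "card ((LZ :: 'a poly \<Rightarrow> ('a poly, 'a) eidx) ` Zset m) = card (Zset m :: 'a poly set)"
      by (rule card_image) (auto simp: inj_on_def)
    also have "card (PKset m :: ('a poly, 'a) eidx set) = card (Zset m :: 'a poly set)"
      unfolding card_PKset card_Zset ..
    finally have "order 0 (char_poly (wenger_matrix m TYPE('a))) = 2 * card (Zset m :: 'a poly set)" by simp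
    moreover have "int (card (Zset m :: 'a poly set)) = wenger_mult q m 0"
      using count_i[of 0 m, where 'a='a] mq by (simp add: q_def Zset_def)
    ultimately show ?thesis by simp
  qed
  show ?thesis using part1 part2 part3 by blast
qed

end
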